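(* Suppose $\mathcal R\subset\mathcal G$ has Property 2. Then the kernel of the seminorm $\|\cdot\|_{\mathcal R}$ on $U_{\mathrm{per}}$ is $U_{\mathrm{iso},0,0}\cap U_{\mathrm{per}}$.
   Context: Euclidean group: $\mathrm E(n)$ consists of pairs $(A|b)$, $A\in\mathrm O(n)$, $b\in\mathbb R^n$, acting by $(A|b)\cdot x=Ax+b$, product $(A_1|b_1)(A_2|b_2)=(A_1A_2|b_1+A_1b_2)$; $\mathrm{rot}(A|b)=A$. Standing setting: $d=d_1+d_2$; $\mathcal S<\mathrm E(d_2)$ is a space group with translation subgroup $\mathcal T_{\mathcal S}$; $A\oplus(B|b)=(\mathrm{diag}(A,B)|(0,b))$; $\mathcal G$ is a discrete subgroup of $\mathrm E(d)$ contained in $\{A\oplus s:A\in\mathrm O(d_1),s\in\mathcal S\}$ projecting onto $\mathcal S$; $\mathcal T\subset\mathcal G$ maps bijectively onto $\mathcal T_{\mathcal S}$. There is $m_0\in\mathbb N$ such that $\mathcal T^N=\{t^N:t\in\mathcal T\}$ is a normal subgroup iff $N\in\mathcal M=m_0\mathbb N$, then isomorphic to $\mathbb Z^{d_2}$ of finite index; $\mathcal C_N$ is a fixed set of representatives of $\mathcal G/\mathcal T^N$. $U_{\mathrm{per}}$: maps $u:\mathcal G\to\mathbb R^d$ that are $\mathcal T^N$-periodic ($u(gt)=u(g)$ for $t\in\mathcal T^N$) for some $N\in\mathcal M$. $x_0\in\mathbb R^d$ with $g\mapsto g\cdot x_0$ injective; $d_{\mathrm{aff}}=\dim\mathrm{aff}(\mathcal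 G\cdot x_0)$; assumed $\mathcal G\cdot x_0\subset\{0_{d-d_{\mathrm{aff}}}\}\times\mathbb R^{d_{\mathrm{aff}}}$ and $\mathcal G$ acts trivially on $\mathbb R^{d-d_{\mathrm{aff}}}\times\{0\}$. For $\mathcal R\subset\mathcal G$, $U_{\mathrm{iso}}(\mathcal R)$ is the set of $v:\mathcal R\to\mathbb R^d$ with $a\in\mathbb R^d$, $S\in\mathrm{Skew}(d)$ such that $\mathrm{rot}(g)v(g)=a+S(g\cdot x_0-x_0)$ for all $g\in\mathcal R$. For finite $\mathcal R$ and $\mathcal T^N$-periodic $u$: $\|u\|_{\mathcal R}=\big(\frac1{|\mathcal C_N|}\sum_{g\in\mathcal C_N}\mathrm{dist}(u(g\,\cdot)|_{\mathcal R},U_{\mathrm{iso}}(\mathcal R))^2\big)^{1/2}$ (Euclidean distance in $(\mathbb R^d)^{\mathcal R}$). $U_{\mathrm{iso},0,0}$ is the set of $u:\mathcal G\to\mathbb R^d$ with $a\in\mathbb R^d$, $S\in\mathrm{Skew}(d_1)$ such that $\mathrm{rot}(g)u(g)=a+(S\oplus0_{d_2\times d_2})(g\cdot x_0-x_0)$ for all $g\in\mathcal G$. Property 1: $\mathcal R$ finite, $\mathrm{id}\in\mathcal R$, $\mathrm{aff}(\mathcal R\cdot x_0)=\mathrm{aff}(\mathcal G\cdot x_0)$. Property 2: $\mathcal R$ finite, and there are $\mathcal R',\mathcal R''$ with $\mathrm{id}\in\mathcal R'$, $\mathcal R'$ generating $\mathcal G$, $\mathcal R''$ with Property 1, and $\{gh:g\in\mathcal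 R',h\in\mathcal R''\}\subset\mathcal R$. *)

theory Defs
  imports Complex_Main "Jordan_Normal_Form.Matrix" "Jordan_Normal_Form.Determinant"
begin

type_synonym euc = "real mat \<times> real vec"

definition orth_group :: "nat \<Rightarrow> real mat set" where
  "orth_group n = {A. A \<in> carrier_mat n n \<and> transpose_mat A * A = 1\<^sub>m n}"

definition euc_group :: "nat \<Rightarrow> euc set" where
  "euc_group n = {(A, b). A \<in> orth_group n \<and> b \<in> carrier_vec n}"

definition euc_mult :: "euc \<Rightarrow> euc \<Rightarrow> euc" where
  "euc_mult g h = (fst g * fst h, snd g + fst g *\<^sub>v snd h)"

definition euc_id :: "nat \<Rightarrow> euc" where
  "euc_id n = (1\<^sub>m n, 0\<^sub>v n)"

definition euc_inv :: "euc \<Rightarrow> euc" where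
  "euc_inv g = (transpose_mat (fst g), - (transpose_mat (fst g) *\<^sub>v snd g))"

definition euc_act :: "euc \<Rightarrow> real vec \<Rightarrow> real vec" where
  "euc_act g x = fst g *\<^sub>v x + snd g"

definition rot :: "euc \<Rightarrow> real mat" where
  "rot g = fst g"

primrec euc_pow :: "nat \<Rightarrow> euc \<Rightarrow> nat \<Rightarrow> euc" where
  "euc_pow n g 0 = euc_id n"
| "euc_pow n g (Suc k) = euc_mult g (euc_pow n g k)"

definition euc_dist :: "nat \<Rightarrow> euc \<Rightarrow> euc \<Rightarrow> real" where
  "euc_dist n g h = sqrt ((\<Sum>i<n. \<Sum>j<n. (fst g $$ (i,j) - fst h $$ (i,j))\<^sup>2)
                        + (\<Sum>i<n. (snd g $ i - snd h $ i)\<^sup>2))"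

definition euc_subgroup :: "nat \<Rightarrow> euc set \<Rightarrow> bool" where
  "euc_subgroup n H \<longleftrightarrow> H \<subseteq> euc_group n \<and> euc_id n \<in> H
     \<and> (\<forall>g\<in>H. \<forall>h\<in>H. euc_mult g h \<in> H) \<and> (\<forall>g\<in>H. euc_inv g \<in> H)"

definition euc_discrete_subgroup :: "nat \<Rightarrow> euc set \<Rightarrow> bool" where
  "euc_discrete_subgroup n H \<longleftrightarrow> euc_subgroup n H
     \<and> (\<forall>g\<in>H. \<exists>\<epsilon>>0. \<forall>h\<in>H. euc_dist n g h < \<epsilon> \<longrightarrow> h = g)"

definition euc_normal :: "nat \<Rightarrow> euc set \<Rightarrow> euc set \<Rightarrow> bool" where
  "euc_normal n K H \<longleftrightarrow> euc_subgroup n K \<and> K \<subseteq> H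
     \<and> (\<forall>g\<in>H. \<forall>k\<in>K. euc_mult (euc_mult g k) (euc_inv g) \<in> K)"

inductive_set euc_gen :: "nat \<Rightarrow> euc set \<Rightarrow> euc set" for n X where
  gen_id: "euc_id n \<in> euc_gen n X"
| gen_base: "x \<in> X \<Longrightarrow> x \<in> euc_gen n X"
| gen_mult: "g \<in> euc_gen n X \<Longrightarrow> h \<in> euc_gen n X \<Longrightarrow> euc_mult g h \<in> euc_gen n X"
| gen_inv: "g \<in> euc_gen n X \<Longrightarrow> euc_inv g \<in> euc_gen n X"

definition transl_subgroup :: "nat \<Rightarrow> euc set \<Rightarrow> euc set" where
  "transl_subgroup n H = {g \<in> H. fst g = 1\<^sub>m n}"

definition space_group :: "nat \<Rightarrow> euc set \<Rightarrow> bool" where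
  "space_group n S \<longleftrightarrow> euc_discrete_subgroup n S
     \<and> (\<exists>B \<in> carrier_mat n n. det B \<noteq> 0 \<and>
          snd ` transl_subgroup n S
            = {B *\<^sub>v z | z. z \<in> carrier_vec n \<and> (\<forall>i<n. z $ i \<in> \<int>)})"

definition dsum :: "nat \<Rightarrow> nat \<Rightarrow> real mat \<Rightarrow> euc \<Rightarrow> euc" where
  "dsum d1 d2 A s = (four_block_mat A (0\<^sub>m d1 d2) (0\<^sub>m d2 d1) (fst s), 0\<^sub>v d1 @\<^sub>v snd s)"

definition proj2 :: "nat \<Rightarrow> nat \<Rightarrow> euc \<Rightarrow> euc" where
  "proj2 d1 d2 g = (mat d2 d2 (\<lambda>(i,j). fst g $$ (d1 + i, d1 + j)),
                    vec d2 (\<lambda>i. snd g $ (d1 + i)))"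

definition pow_set :: "nat \<Rightarrow> euc set \<Rightarrow> nat \<Rightarrow> euc set" where
  "pow_set n T N = {euc_pow n t N | t. t \<in> T}"

definition aff_hull :: "nat \<Rightarrow> real vec set \<Rightarrow> real vec set" where
  "aff_hull n X = {y \<in> carrier_vec n. \<exists>F c. finite F \<and> F \<subseteq> X \<and> sum c F = 1
       \<and> (\<forall>i<n. y $ i = (\<Sum>x\<in>F. c x * x $ i))}"

definition aff_indep :: "nat \<Rightarrow> real vec set \<Rightarrow> bool" where
  "aff_indep n F \<longleftrightarrow> (\<forall>c. sum c F = 0 \<and> (\<forall>i<n. (\<Sum>x\<in>F. c x * x $ i) = 0)
       \<longrightarrow> (\<forall>x\<in>F. c x = 0))"

definition aff_dim :: "nat \<Rightarrow> real vec set \<Rightarrow> nat" where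
  "aff_dim n X = (GREATEST k. \<exists>F \<subseteq> X. finite F \<and> card F = Suc k \<and> aff_indep n F)"

definition standing_setting ::
  "nat \<Rightarrow> nat \<Rightarrow> euc set \<Rightarrow> euc set \<Rightarrow> euc set \<Rightarrow> nat \<Rightarrow> (nat \<Rightarrow> euc set)
     \<Rightarrow> real vec \<Rightarrow> nat \<Rightarrow> bool" where
  "standing_setting d1 d2 S G T m0 C x0 daff \<longleftrightarrow>
     space_group d2 S
   \<and> euc_discrete_subgroup (d1 + d2) G
   \<and> G \<subseteq> {dsum d1 d2 A s | A s. A \<in> orth_group d1 \<and> s \<in> S}
   \<and> (\<forall>s\<in>S. \<exists>A\<in>orth_group d1. dsum d1 d2 A s \<in> G)
   \<and> T \<subseteq> G \<and> bij_betw (proj2 d1 d2) T (transl_subgroup d2 S)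
   \<and> m0 \<ge> 1
   \<and> (\<forall>N\<ge>1. euc_normal (d1 + d2) (pow_set (d1 + d2) T N) G \<longleftrightarrow> m0 dvd N)
   \<and> (\<forall>N\<ge>1. m0 dvd N \<longrightarrow>
        C N \<subseteq> G \<and> finite (C N)
      \<and> (\<forall>g\<in>G. \<exists>!c\<in>C N. \<exists>t\<in>pow_set (d1 + d2) T N. g = euc_mult c t))
   \<and> x0 \<in> carrier_vec (d1 + d2)
   \<and> inj_on (\<lambda>g. euc_act g x0) G
   \<and> daff = aff_dim (d1 + d2) ((\<lambda>g. euc_act g x0) ` G)
   \<and> (\<forall>g\<in>G. \<forall>i < d1 + d2 - daff. euc_act g x0 $ i = 0)
   \<and> (\<forall>g\<in>G. \<forall>y\<in>carrier_vec (d1 + d2).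
        (\<forall>i. d1 + d2 - daff \<le> i \<and> i < d1 + d2 \<longrightarrow> y $ i = 0) \<longrightarrow> rot g *\<^sub>v y = y)"

definition periodic :: "nat \<Rightarrow> euc set \<Rightarrow> euc set \<Rightarrow> nat \<Rightarrow> (euc \<Rightarrow> real vec) \<Rightarrow> bool" where
  "periodic d G T N u \<longleftrightarrow> (\<forall>g\<in>G. u g \<in> carrier_vec d)
     \<and> (\<forall>g\<in>G. \<forall>t\<in>pow_set d T N. u (euc_mult g t) = u g)"

definition U_per :: "nat \<Rightarrow> euc set \<Rightarrow> euc set \<Rightarrow> nat \<Rightarrow> (euc \<Rightarrow> real vec) set" where
  "U_per d G T m0 = {u. \<exists>N\<ge>1. m0 dvd N \<and> periodic d G T N u}"

definition skew :: "nat \<Rightarrow> real mat set" where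
  "skew n = {S \<in> carrier_mat n n. transpose_mat S = - S}"

definition U_iso :: "nat \<Rightarrow> real vec \<Rightarrow> euc set \<Rightarrow> (euc \<Rightarrow> real vec) set" where
  "U_iso d x0 R = {v. (\<forall>g\<in>R. v g \<in> carrier_vec d) \<and>
      (\<exists>a\<in>carrier_vec d. \<exists>S\<in>skew d.
         \<forall>g\<in>R. rot g *\<^sub>v v g = a + S *\<^sub>v (euc_act g x0 - x0))}"

definition U_iso00 :: "nat \<Rightarrow> nat \<Rightarrow> real vec \<Rightarrow> euc set \<Rightarrow> (euc \<Rightarrow> real vec) set" where
  "U_iso00 d1 d2 x0 G = {u. (\<forall>g\<in>G. u g \<in> carrier_vec (d1 + d2)) \<and>
      (\<exists>a\<in>carrier_vec (d1 + d2). \<exists>S\<in>skew d1.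
         \<forall>g\<in>G. rot g *\<^sub>v u g
            = a + four_block_mat S (0\<^sub>m d1 d2) (0\<^sub>m d2 d1) (0\<^sub>m d2 d2) *\<^sub>v (euc_act g x0 - x0))}"

definition dist_Uiso :: "nat \<Rightarrow> real vec \<Rightarrow> euc set \<Rightarrow> (euc \<Rightarrow> real vec) \<Rightarrow> real" where
  "dist_Uiso d x0 R w =
     Inf {sqrt (\<Sum>h\<in>R. \<Sum>i<d. (w h $ i - v h $ i)\<^sup>2) | v. v \<in> U_iso d x0 R}"

definition seminorm_R ::
  "nat \<Rightarrow> real vec \<Rightarrow> euc set \<Rightarrow> euc set \<Rightarrow> nat \<Rightarrow> (euc \<Rightarrow> real vec) \<Rightarrow> real" where
  "seminorm_R d x0 R C_N N u =
     sqrt (1 / real (card C_N) * (\<Sum>g\<in>C_N. (dist_Uiso d x0 R (\<lambda>h. u (euc_mult g h)))\<^sup>2))"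

definition property1 :: "nat \<Rightarrow> euc set \<Rightarrow> real vec \<Rightarrow> euc set \<Rightarrow> bool" where
  "property1 d G x0 R \<longleftrightarrow> finite R \<and> R \<subseteq> G \<and> euc_id d \<in> R
     \<and> aff_hull d ((\<lambda>g. euc_act g x0) ` R) = aff_hull d ((\<lambda>g. euc_act g x0) ` G)"

definition property2 :: "nat \<Rightarrow> euc set \<Rightarrow> real vec \<Rightarrow> euc set \<Rightarrow> bool" where
  "property2 d G x0 R \<longleftrightarrow> finite R \<and> R \<subseteq> G \<and>
     (\<exists>R' R''. R' \<subseteq> G \<and> euc_id d \<in> R' \<and> euc_gen d R' = G \<and> property1 d G x0 R''
        \<and> {euc_mult g h | g h. g \<in> R' \<and> h \<in> R''} \<subseteq> R)"

end

theory Submission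
  imports Defs
begin
lemma mmv_uminus: "v \<in> carrier_vec n \<Longrightarrow> A \<in> carrier_mat m n \<Longrightarrow> (A :: 'a :: ring mat) *\<^sub>v (- v) = - (A *\<^sub>v v)"
  by (intro eq_vecI, auto)

lemma mmv_zero: "A \<in> carrier_mat m n \<Longrightarrow> (A :: 'a :: semiring_0 mat) *\<^sub>v 0\<^sub>v n = 0\<^sub>v m"
  by (intro eq_vecI, auto)

lemma eg_D:
  assumes "g \<in> euc_group d"
  shows "fst g \<in> carrier_mat d d" "snd g \<in> carrier_vec d"
    "transpose_mat (fst g) * fst g = 1\<^sub>m d" "fst g * transpose_mat (fst g) = 1\<^sub>m d"
proof -
  obtain A b where g: "g = (A, b)" by (cases g)
  have A: "A \<in> carrier_mat d d" "b \<in> carrier_vec d" "transpose_mat A * A = 1\<^sub>m d"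
    using assms unfolding g euc_group_def orth_group_def by blast+
  have AT: "transpose_mat A \<in> carrier_mat d d" using A(1) by simp
  have "A * transpose_mat A = 1\<^sub>m d"
    by (rule mat_mult_left_right_inverse[OF AT A(1) A(3)])
  then show "fst g \<in> carrier_mat d d" "snd g \<in> carrier_vec d"
    "transpose_mat (fst g) * fst g = 1\<^sub>m d" "fst g * transpose_mat (fst g) = 1\<^sub>m d"
    using A unfolding g by simp_all
qed

lemma rot_carrier: "g \<in> euc_group d \<Longrightarrow> rot g \<in> carrier_mat d d"
  using eg_D by (simp add: rot_def)

lemma euc_mult_assoc:
  assumes "fst g \<in> carrier_mat d d" "snd g \<in> carrier_vec d"
    "fst h \<in> carrier_mat d d" "snd h \<in> carrier_vec d"
    "fst k \<in> carrier_mat d d" "snd k \<in> carrier_vec d"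
  shows "euc_mult (euc_mult g h) k = euc_mult g (euc_mult h k)"
proof -
  have 1: "fst g * fst h * fst k = fst g * (fst h * fst k)"
    using assms by (rule_tac assoc_mult_mat) auto
  have 2: "(fst g * fst h) *\<^sub>v snd k = fst g *\<^sub>v (fst h *\<^sub>v snd k)"
    using assms by (rule_tac assoc_mult_mat_vec) auto
  have 3: "fst g *\<^sub>v (snd h + fst h *\<^sub>v snd k) = fst g *\<^sub>v snd h + fst g *\<^sub>v (fst h *\<^sub>v snd k)"
    using assms by (rule_tac mult_add_distrib_mat_vec) auto
  have 4: "snd g + fst g *\<^sub>v snd h + fst g *\<^sub>v (fst h *\<^sub>v snd k)
      = snd g + (fst g *\<^sub>v snd h + fst g *\<^sub>v (fst h *\<^sub>v snd k))"
    using assms by (rule_tac assoc_add_vec) auto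
  show ?thesis unfolding euc_mult_def using 1 2 3 4 by simp
qed

lemma euc_act_mult:
  assumes "fst g \<in> carrier_mat d d" "snd g \<in> carrier_vec d"
    "fst h \<in> carrier_mat d d" "snd h \<in> carrier_vec d" "x \<in> carrier_vec d"
  shows "euc_act (euc_mult g h) x = euc_act g (euc_act h x)"
proof -
  have 2: "(fst g * fst h) *\<^sub>v x = fst g *\<^sub>v (fst h *\<^sub>v x)"
    using assms by (rule_tac assoc_mult_mat_vec) auto
  have 3: "fst g *\<^sub>v (fst h *\<^sub>v x + snd h) = fst g *\<^sub>v (fst h *\<^sub>v x) + fst g *\<^sub>v snd h"
    using assms by (rule_tac mult_add_distrib_mat_vec) auto
  have 4: "fst g *\<^sub>v (fst h *\<^sub>v x) + (snd g + fst g *\<^sub>v snd h)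
     = fst g *\<^sub>v (fst h *\<^sub>v x) + fst g *\<^sub>v snd h + snd g"
    using assms by (intro eq_vecI) auto
  show ?thesis unfolding euc_act_def euc_mult_def using 2 3 4 by simp
qed

lemma euc_act_diff:
  assumes "fst g \<in> carrier_mat d d" "snd g \<in> carrier_vec d"
    "y \<in> carrier_vec d" "z \<in> carrier_vec d"
  shows "euc_act g y - euc_act g z = fst g *\<^sub>v (y - z)"
  using assms by (auto simp: euc_act_def mult_minus_distrib_mat_vec)

lemma euc_id_mult:
  assumes "fst g \<in> carrier_mat d d" "snd g \<in> carrier_vec d"
  shows "euc_mult (euc_id d) g = g"
  using assms by (auto simp: euc_mult_def euc_id_def)

lemma euc_mult_id:
  assumes "fst g \<in> carrier_mat d d" "snd g \<in> carrier_vec d"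
  shows "euc_mult g (euc_id d) = g"
  using assms by (cases g, auto simp: euc_mult_def euc_id_def mmv_zero)

lemma euc_inv_right:
  assumes "g \<in> euc_group d"
  shows "euc_mult g (euc_inv g) = euc_id d"
proof -
  note D = eg_D[OF assms]
  have "fst g *\<^sub>v (- (transpose_mat (fst g) *\<^sub>v snd g)) = - snd g"
  proof -
    have "fst g *\<^sub>v (transpose_mat (fst g) *\<^sub>v snd g) = (fst g * transpose_mat (fst g)) *\<^sub>v snd g"
      using D by (subst assoc_mult_mat_vec[of _ d d _ d]) auto
    also have "\<dots> = snd g" using D by simp
    finally show ?thesis using D by (subst mmv_uminus[of _ d]) auto
  qed
  then show ?thesis using D by (auto simp: euc_mult_def euc_inv_def euc_id_def)
qed

lemma euc_inv_left:
  assumes "g \<in> euc_group d"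
  shows "euc_mult (euc_inv g) g = euc_id d"
proof -
  note D = eg_D[OF assms]
  have "transpose_mat (fst g) *\<^sub>v snd g \<in> carrier_vec d" using D by auto
  then show ?thesis using D by (auto simp: euc_mult_def euc_inv_def euc_id_def)
qed

lemma euc_inv_inv:
  assumes "g \<in> euc_group d"
  shows "euc_inv (euc_inv g) = g"
proof -
  note D = eg_D[OF assms]
  have "fst g *\<^sub>v (transpose_mat (fst g) *\<^sub>v snd g) = snd g"
  proof -
    have "fst g *\<^sub>v (transpose_mat (fst g) *\<^sub>v snd g) = (fst g * transpose_mat (fst g)) *\<^sub>v snd g"
      using D by (subst assoc_mult_mat_vec[of _ d d _ d]) auto
    also have "\<dots> = snd g" using D by simp
    finally show ?thesis .
  qed
  moreover have "- (fst g *\<^sub>v - (transpose_mat (fst g) *\<^sub>v snd g)) = fst g *\<^sub>v (transpose_mat (fst g) *\<^sub>v snd g)"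
    using D by (subst mmv_uminus[of _ d]) auto
  ultimately show ?thesis using D by (cases g, auto simp: euc_inv_def)
qed

definition ipI :: "'i set \<Rightarrow> ('i \<Rightarrow> real) \<Rightarrow> ('i \<Rightarrow> real) \<Rightarrow> real" where
  "ipI I f g = (\<Sum>x\<in>I. f x * g x)"

lemma proj_le:
  assumes pos: "ipI I p p > 0"
  shows "(\<Sum>x\<in>I. (f x - (ipI I f p / ipI I p p) * p x)\<^sup>2) \<le> (\<Sum>x\<in>I. (f x)\<^sup>2)"
proof -
  define a where "a = ipI I f p"
  define b where "b = ipI I p p"
  have "(\<Sum>x\<in>I. (f x - (a / b) * p x)\<^sup>2)
      = (\<Sum>x\<in>I. (f x)\<^sup>2) - 2 * (a/b) * (\<Sum>x\<in>I. f x * p x) + (a/b)^2 * (\<Sum>x\<in>I. p x * p x)"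
    by (simp add: power2_eq_square algebra_simps sum.distrib sum_subtractf sum_distrib_left)
  also have "\<dots> = (\<Sum>x\<in>I. (f x)\<^sup>2) - a^2 / b"
    using pos unfolding a_def[symmetric] b_def[symmetric] ipI_def[symmetric]
    by (simp add: a_def[symmetric] b_def[symmetric] power2_eq_square field_simps)
  also have "\<dots> \<le> (\<Sum>x\<in>I. (f x)\<^sup>2)" using pos b_def by simp
  finally show ?thesis unfolding a_def b_def .
qed

lemma closed_lin:
  fixes \<Phi> :: "('j \<Rightarrow> real) \<Rightarrow> 'i \<Rightarrow> real" and w :: "'i \<Rightarrow> real"
  assumes "finite I" "finite J"
    and lin: "\<And>c c' x. x \<in> I \<Longrightarrow> \<Phi> (\<lambda>j. c j + c' j) x = \<Phi> c x + \<Phi> c' x"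
    and smul: "\<And>r c x. x \<in> I \<Longrightarrow> \<Phi> (\<lambda>j. r * c j) x = r * \<Phi> c x"
    and supp: "\<And>c c' x. x \<in> I \<Longrightarrow> (\<forall>j\<in>J. c j = c' j) \<Longrightarrow> \<Phi> c x = \<Phi> c' x"
    and approx: "\<forall>\<epsilon>>0. \<exists>c. (\<Sum>x\<in>I. (w x - \<Phi> c x)\<^sup>2) < \<epsilon>"
  shows "\<exists>c. \<forall>x\<in>I. w x = \<Phi> c x"
  using assms(2) lin smul supp approx
proof (induction J arbitrary: \<Phi> w rule: finite_induct)
  case empty
  have z: "\<Phi> c x = 0" if "x \<in> I" for c x
  proof -
    have "\<Phi> c x = \<Phi> (\<lambda>j. 0 * c j) x" using empty.prems(3)[OF that] by simp
    also have "\<dots> = 0" using empty.prems(2)[OF that, of 0 c] by simp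
    finally show ?thesis .
  qed
  have "(\<Sum>x\<in>I. (w x)\<^sup>2) \<le> 0"
  proof (rule field_le_epsilon[where x = "(\<Sum>x\<in>I. (w x)\<^sup>2)" and y = 0, simplified])
    fix e :: real assume "e > 0"
    then obtain c where "(\<Sum>x\<in>I. (w x - \<Phi> c x)\<^sup>2) < e" using empty.prems(4) by blast
    then show "(\<Sum>x\<in>I. (w x)\<^sup>2) \<le> e" using z by simp
  qed
  then have "\<forall>x\<in>I. (w x)\<^sup>2 = 0"
    using sum_nonneg_eq_0_iff[OF \<open>finite I\<close>, of "\<lambda>x. (w x)\<^sup>2"]
    by (metis (no_types, lifting) antisym sum_nonneg zero_le_power2)
  then show ?case using z by auto
next
  case (insert j J)
  define \<delta> where "\<delta> = (\<lambda>k. if k = j then 1 else (0::real))"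
  define p where "p = \<Phi> \<delta>"
  have dec: "\<Phi> c x = \<Phi> (c(j := 0)) x + c j * p x" if "x \<in> I" for c x
  proof -
    have "\<Phi> c x = \<Phi> (\<lambda>k. (c(j:=0)) k + c j * \<delta> k) x"
      using insert.prems(3)[OF that] by (auto simp: \<delta>_def)
    also have "\<dots> = \<Phi> (c(j := 0)) x + \<Phi> (\<lambda>k. c j * \<delta> k) x" using insert.prems(1)[OF that] .
    also have "\<dots> = \<Phi> (c(j := 0)) x + c j * p x" using insert.prems(2)[OF that] p_def by simp
    finally show ?thesis .
  qed
  show ?case
  proof (cases "ipI I p p > 0")
    case False
    have "ipI I p p \<ge> 0" unfolding ipI_def by (auto intro: sum_nonneg)
    with False have "ipI I p p = 0" by simp
    then have p0: "\<forall>x\<in>I. p x = 0"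
      using sum_nonneg_eq_0_iff[OF \<open>finite I\<close>, of "\<lambda>x. p x * p x"] unfolding ipI_def by auto
    have suppJ: "\<Phi> c x = \<Phi> c' x" if "x \<in> I" "\<forall>k\<in>J. c k = c' k" for c c' x
    proof -
      have "\<Phi> c x = \<Phi> (c(j := 0)) x" using dec[OF that(1)] p0 that(1) by simp
      also have "\<dots> = \<Phi> (c'(j := 0)) x" using insert.prems(3)[OF that(1)] that(2) by auto
      also have "\<dots> = \<Phi> c' x" using dec[OF that(1)] p0 that(1) by simp
      finally show ?thesis .
    qed
    show ?thesis by (rule insert.IH[OF insert.prems(1,2) suppJ insert.prems(4)]) auto
  next
    case True
    define P where "P = (\<lambda>f x. f x - (ipI I f p / ipI I p p) * p x)"
    define \<Phi>' where "\<Phi>' = (\<lambda>c. P (\<Phi> c))"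
    have ipl: "ipI I (\<lambda>x. f x + g x) p = ipI I f p + ipI I g p" for f g
      unfolding ipI_def by (simp add: algebra_simps sum.distrib)
    have ips: "ipI I (\<lambda>x. r * f x) p = r * ipI I f p" for r f
      unfolding ipI_def by (simp add: algebra_simps sum_distrib_left)
    have ipc: "ipI I f p = ipI I g p" if "\<forall>x\<in>I. f x = g x" for f g
      unfolding ipI_def using that by simp
    have lin': "\<Phi>' (\<lambda>j. c j + c' j) x = \<Phi>' c x + \<Phi>' c' x" if "x \<in> I" for c c' x
    proof -
      have "ipI I (\<Phi> (\<lambda>j. c j + c' j)) p = ipI I (\<lambda>x. \<Phi> c x + \<Phi> c' x) p"
        by (rule ipc) (use insert.prems(1) in auto)
      then show ?thesis unfolding \<Phi>'_def P_def using insert.prems(1)[OF that] ipl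
        by (simp add: algebra_simps add_divide_distrib)
    qed
    have smul': "\<Phi>' (\<lambda>j. r * c j) x = r * \<Phi>' c x" if "x \<in> I" for r c x
    proof -
      have "ipI I (\<Phi> (\<lambda>j. r * c j)) p = ipI I (\<lambda>x. r * \<Phi> c x) p"
        by (rule ipc) (use insert.prems(2) in auto)
      then show ?thesis unfolding \<Phi>'_def P_def using insert.prems(2)[OF that] ips
        by (simp add: algebra_simps)
    qed
    have Pp: "ipI I p p / ipI I p p = 1" using True by simp
    have dec': "\<Phi>' c x = \<Phi>' (c(j := 0)) x" if "x \<in> I" for c x
    proof -
      have "ipI I (\<Phi> c) p = ipI I (\<lambda>x. \<Phi> (c(j := 0)) x + c j * p x) p"
        by (rule ipc) (blast intro: dec)
      also have "\<dots> = ipI I (\<Phi> (c(j := 0))) p + c j * ipI I p p"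
        using ipl ips by simp
      finally have e: "ipI I (\<Phi> c) p = ipI I (\<Phi> (c(j := 0))) p + c j * ipI I p p" .
      have D: "ipI I p p \<noteq> 0" using True by simp
      have "(ipI I (\<Phi> (c(j := 0))) p + c j * ipI I p p) / ipI I p p
          = ipI I (\<Phi> (c(j := 0))) p / ipI I p p + c j"
        using D by (simp add: add_divide_distrib)
      then show ?thesis unfolding \<Phi>'_def P_def dec[OF that, of c] e
        by (simp add: algebra_simps)
    qed
    have suppJ: "\<Phi>' c x = \<Phi>' c' x" if "x \<in> I" "\<forall>k\<in>J. c k = c' k" for c c' x
    proof -
      have "\<Phi>' c x = \<Phi>' (c(j := 0)) x" using dec'[OF that(1)] .
      also have "\<dots> = \<Phi>' (c'(j := 0)) x"
      proof -
        have "\<Phi> (c(j := 0)) y = \<Phi> (c'(j := 0)) y" if "y \<in> I" for y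
          using insert.prems(3)[OF that] \<open>\<forall>k\<in>J. c k = c' k\<close> by auto
        then have "\<Phi> (c(j := 0)) x = \<Phi> (c'(j := 0)) x"
          and "ipI I (\<Phi> (c(j := 0))) p = ipI I (\<Phi> (c'(j := 0))) p"
          using \<open>x \<in> I\<close> by (auto intro: ipc)
        then show ?thesis unfolding \<Phi>'_def P_def by simp
      qed
      also have "\<dots> = \<Phi>' c' x" using dec'[OF that(1)] by simp
      finally show ?thesis .
    qed
    have approx': "\<forall>\<epsilon>>0. \<exists>c. (\<Sum>x\<in>I. (P w x - \<Phi>' c x)\<^sup>2) < \<epsilon>"
    proof (intro allI impI)
      fix e :: real assume "e > 0"
      then obtain c where c: "(\<Sum>x\<in>I. (w x - \<Phi> c x)\<^sup>2) < e" using insert.prems(4) by blast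
      define f where "f = (\<lambda>x. w x - \<Phi> c x)"
      have "ipI I f p = ipI I w p - ipI I (\<Phi> c) p"
        unfolding f_def ipI_def by (simp add: algebra_simps sum_subtractf)
      then have "P w x - \<Phi>' c x = f x - (ipI I f p / ipI I p p) * p x" for x
        unfolding \<Phi>'_def P_def f_def by (simp add: diff_divide_distrib left_diff_distrib)
      then have "(\<Sum>x\<in>I. (P w x - \<Phi>' c x)\<^sup>2) = (\<Sum>x\<in>I. (f x - (ipI I f p / ipI I p p) * p x)\<^sup>2)"
        by simp
      also have "\<dots> \<le> (\<Sum>x\<in>I. (f x)\<^sup>2)" by (rule proj_le[OF True])
      finally have "(\<Sum>x\<in>I. (P w x - \<Phi>' c x)\<^sup>2) < e" using c unfolding f_def by simp
      then show "\<exists>c. (\<Sum>x\<in>I. (P w x - \<Phi>' c x)\<^sup>2) < e" by blast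
    qed
    obtain c where c: "\<forall>x\<in>I. P w x = \<Phi>' c x"
      using insert.IH[OF lin' smul' suppJ approx'] by blast
    define \<beta> where "\<beta> = ipI I w p / ipI I p p - ipI I (\<Phi> c) p / ipI I p p"
    have "w x = \<Phi> (c(j := c j + \<beta>)) x" if "x \<in> I" for x
    proof -
      have "w x = \<Phi> c x + \<beta> * p x" using c that unfolding P_def \<Phi>'_def \<beta>_def
        by (simp add: algebra_simps)
      also have "\<Phi> c x = \<Phi> (c(j := 0)) x + c j * p x" using dec[OF that] .
      also have "\<Phi> (c(j := c j + \<beta>)) x = \<Phi> (c(j := 0)) x + (c j + \<beta>) * p x"
        using dec[OF that, of "c(j := c j + \<beta>)"] by simp
      ultimately show ?thesis by (simp add: algebra_simps)
    qed
    then show ?thesis by blast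
  qed
qed

lemma mmv_index: "A \<in> carrier_mat m n \<Longrightarrow> v \<in> carrier_vec n \<Longrightarrow> i < m \<Longrightarrow>
   (A *\<^sub>v v) $ i = (\<Sum>k<n. A $$ (i,k) * v $ k)"
  by (auto simp: scalar_prod_def lessThan_atLeast0 intro!: sum.cong)

definition Phi :: "nat \<Rightarrow> real vec \<Rightarrow> (nat + nat \<times> nat \<Rightarrow> real) \<Rightarrow> euc \<times> nat \<Rightarrow> real" where
  "Phi d x0 c hi = (\<Sum>k<d. rot (fst hi) $$ (k, snd hi) * (c (Inl k)
      + (\<Sum>l<d. (c (Inr (k,l)) - c (Inr (l,k))) * (euc_act (fst hi) x0 - x0) $ l)))"

definition amat :: "nat \<Rightarrow> (nat + nat \<times> nat \<Rightarrow> real) \<Rightarrow> real vec" where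
  "amat d c = vec d (\<lambda>k. c (Inl k))"

definition Smat :: "nat \<Rightarrow> (nat + nat \<times> nat \<Rightarrow> real) \<Rightarrow> real mat" where
  "Smat d c = mat d d (\<lambda>(k,l). c (Inr (k,l)) - c (Inr (l,k)))"

lemma Smat_skew: "Smat d c \<in> skew d"
  unfolding skew_def Smat_def by (auto intro!: eq_matI)

lemma Phi_vec:
  assumes "h \<in> euc_group d" "x0 \<in> carrier_vec d" "i < d"
  shows "Phi d x0 c (h, i) = (transpose_mat (rot h) *\<^sub>v (amat d c + Smat d c *\<^sub>v (euc_act h x0 - x0))) $ i"
proof -
  have rc: "rot h \<in> carrier_mat d d" using assms(1) by (rule rot_carrier)
  have ac: "euc_act h x0 - x0 \<in> carrier_vec d"
    using assms eg_D[OF assms(1)] by (auto simp: euc_act_def)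
  have "(transpose_mat (rot h) *\<^sub>v (amat d c + Smat d c *\<^sub>v (euc_act h x0 - x0))) $ i
     = (\<Sum>k<d. transpose_mat (rot h) $$ (i,k) * (amat d c + Smat d c *\<^sub>v (euc_act h x0 - x0)) $ k)"
  proof (rule mmv_index)
    show "amat d c + Smat d c *\<^sub>v (euc_act h x0 - x0) \<in> carrier_vec d"
      using ac by (intro add_carrier_vec mult_mat_vec_carrier) (auto simp: amat_def Smat_def)
  qed (use rc assms in auto)
  also have "\<dots> = Phi d x0 c (h, i)"
    unfolding Phi_def using rc ac assms
    by (intro sum.cong refl) (auto simp: amat_def Smat_def mmv_index[of _ d d] scalar_prod_def lessThan_atLeast0 intro!: sum.cong)
  finally show ?thesis by simp
qed

lemma Phi_lin: "Phi d x0 (\<lambda>j. c j + c' j) x = Phi d x0 c x + Phi d x0 c' x"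
proof -
  define y where "y = euc_act (fst x) x0 - x0"
  have inner: "(\<Sum>l<d. ((c (Inr (k,l)) + c' (Inr (k,l))) - (c (Inr (l,k)) + c' (Inr (l,k)))) * y $ l)
     = (\<Sum>l<d. (c (Inr (k,l)) - c (Inr (l,k))) * y $ l) + (\<Sum>l<d. (c' (Inr (k,l)) - c' (Inr (l,k))) * y $ l)" for k
    by (simp add: sum.distrib[symmetric] algebra_simps)
  have "Phi d x0 (\<lambda>j. c j + c' j) x = (\<Sum>k<d. rot (fst x) $$ (k, snd x) * (c (Inl k)
      + (\<Sum>l<d. (c (Inr (k,l)) - c (Inr (l,k))) * y $ l))
     + rot (fst x) $$ (k, snd x) * (c' (Inl k)
      + (\<Sum>l<d. (c' (Inr (k,l)) - c' (Inr (l,k))) * y $ l)))"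
    unfolding Phi_def y_def[symmetric] by (intro sum.cong refl, simp only: inner, simp add: ring_distribs)
  then show ?thesis unfolding Phi_def y_def[symmetric] by (simp add: sum.distrib)
qed

lemma Phi_smul: "Phi d x0 (\<lambda>j. r * c j) x = r * Phi d x0 c x"
proof -
  define y where "y = euc_act (fst x) x0 - x0"
  have inner: "(\<Sum>l<d. (r * c (Inr (k,l)) - r * c (Inr (l,k))) * y $ l)
     = r * (\<Sum>l<d. (c (Inr (k,l)) - c (Inr (l,k))) * y $ l)" for k
    by (simp add: sum_distrib_left algebra_simps)
  have "Phi d x0 (\<lambda>j. r * c j) x = (\<Sum>k<d. r * (rot (fst x) $$ (k, snd x) * (c (Inl k)
      + (\<Sum>l<d. (c (Inr (k,l)) - c (Inr (l,k))) * y $ l))))"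
    unfolding Phi_def y_def[symmetric] by (intro sum.cong refl, simp only: inner, simp add: ring_distribs)
  then show ?thesis unfolding Phi_def y_def[symmetric] by (simp add: sum_distrib_left)
qed

lemma Phi_supp:
  assumes "\<forall>j\<in>Inl ` {..<d} \<union> Inr ` ({..<d} \<times> {..<d}). c j = c' j"
  shows "Phi d x0 c x = Phi d x0 c' x"
  unfolding Phi_def using assms by (intro sum.cong refl) auto

lemma orth_back:
  assumes "h \<in> euc_group d" "v \<in> carrier_vec d"
  shows "transpose_mat (rot h) *\<^sub>v (rot h *\<^sub>v v) = v"
proof -
  note D = eg_D[OF assms(1)]
  have "transpose_mat (rot h) *\<^sub>v (rot h *\<^sub>v v) = (transpose_mat (rot h) * rot h) *\<^sub>v v"
    using D assms by (subst assoc_mult_mat_vec[of _ d d _ d]) (auto simp: rot_def)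
  also have "\<dots> = v" using D assms by (simp add: rot_def)
  finally show ?thesis .
qed

lemma orth_fwd:
  assumes "h \<in> euc_group d" "v \<in> carrier_vec d"
  shows "rot h *\<^sub>v (transpose_mat (rot h) *\<^sub>v v) = v"
proof -
  note D = eg_D[OF assms(1)]
  have "rot h *\<^sub>v (transpose_mat (rot h) *\<^sub>v v) = (rot h * transpose_mat (rot h)) *\<^sub>v v"
    using D assms by (subst assoc_mult_mat_vec[of _ d d _ d]) (auto simp: rot_def)
  also have "\<dots> = v" using D assms by (simp add: rot_def)
  finally show ?thesis .
qed

lemma Uiso_Phi:
  assumes "v \<in> U_iso d x0 R" "R \<subseteq> euc_group d" "x0 \<in> carrier_vec d"
  shows "\<exists>c. \<forall>h\<in>R. \<forall>i<d. v h $ i = Phi d x0 c (h, i)"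
proof -
  obtain a S where a: "a \<in> carrier_vec d" and S: "S \<in> skew d"
    and eq: "\<forall>g\<in>R. rot g *\<^sub>v v g = a + S *\<^sub>v (euc_act g x0 - x0)"
    and vc: "\<forall>g\<in>R. v g \<in> carrier_vec d"
    using assms(1) unfolding U_iso_def by blast
  define c where "c = (\<lambda>j. case j of Inl k \<Rightarrow> a $ k | Inr (k,l) \<Rightarrow> S $$ (k,l) / 2)"
  have Sc: "S \<in> carrier_mat d d" and ST: "transpose_mat S = - S" using S by (auto simp: skew_def)
  have am: "amat d c = a" using a by (auto simp: amat_def c_def)
  have Sm: "Smat d c = S"
  proof (rule eq_matI)
    fix k l assume kl: "k < dim_row S" "l < dim_col S"
    have "transpose_mat S $$ (l,k) = (- S) $$ (l,k)" using ST by simp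
    then have "S $$ (k,l) = - S $$ (l,k)" using kl Sc by auto
    then show "Smat d c $$ (k,l) = S $$ (k,l)" using kl Sc by (auto simp: Smat_def c_def)
  qed (use Sc in \<open>auto simp: Smat_def\<close>)
  show ?thesis
  proof (intro exI[of _ c] ballI allI impI)
    fix h i assume h: "h \<in> R" and i: "i < d"
    have "v h = transpose_mat (rot h) *\<^sub>v (rot h *\<^sub>v v h)"
      using orth_back[of h d "v h"] h assms(2) vc by auto
    also have "\<dots> = transpose_mat (rot h) *\<^sub>v (amat d c + Smat d c *\<^sub>v (euc_act h x0 - x0))"
      using eq h am Sm by simp
    finally show "v h $ i = Phi d x0 c (h, i)"
      using Phi_vec[of h d x0 i c] h assms(2,3) i by auto
  qed
qed

lemma Phi_Uiso:
  assumes "R \<subseteq> euc_group d" "x0 \<in> carrier_vec d" "\<forall>h\<in>R. w h \<in> carrier_vec d"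
    and "\<forall>h\<in>R. \<forall>i<d. w h $ i = Phi d x0 c (h, i)"
  shows "w \<in> U_iso d x0 R"
  unfolding U_iso_def
proof (intro CollectI conjI bexI[of _ "amat d c"] bexI[of _ "Smat d c"] ballI)
  fix h assume h: "h \<in> R"
  have hg: "h \<in> euc_group d" using h assms(1) by auto
  have ac: "euc_act h x0 - x0 \<in> carrier_vec d"
    using assms eg_D[OF hg] by (auto simp: euc_act_def)
  have vc: "amat d c + Smat d c *\<^sub>v (euc_act h x0 - x0) \<in> carrier_vec d"
    using ac by (intro add_carrier_vec mult_mat_vec_carrier) (auto simp: amat_def Smat_def)
  have "w h = transpose_mat (rot h) *\<^sub>v (amat d c + Smat d c *\<^sub>v (euc_act h x0 - x0))"
  proof (rule eq_vecI)
    fix i assume "i < dim_vec (transpose_mat (rot h) *\<^sub>v (amat d c + Smat d c *\<^sub>v (euc_act h x0 - x0)))"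
    then have i: "i < d" using rot_carrier[OF hg] by auto
    show "w h $ i = (transpose_mat (rot h) *\<^sub>v (amat d c + Smat d c *\<^sub>v (euc_act h x0 - x0))) $ i"
      using assms(4) h i Phi_vec[OF hg assms(2) i, of c] by auto
  qed (use assms(3) h rot_carrier[OF hg] in auto)
  then show "rot h *\<^sub>v w h = amat d c + Smat d c *\<^sub>v (euc_act h x0 - x0)"
    using orth_fwd[OF hg vc] by simp
qed (use assms Smat_skew in \<open>auto simp: amat_def\<close>)

lemma zero_in_Uiso:
  assumes "R \<subseteq> euc_group d" "x0 \<in> carrier_vec d"
  shows "(\<lambda>_. 0\<^sub>v d) \<in> U_iso d x0 R"
  unfolding U_iso_def
proof (intro CollectI conjI bexI[of _ "0\<^sub>v d"] bexI[of _ "0\<^sub>m d d"] ballI)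
  fix g assume "g \<in> R"
  then have "rot g \<in> carrier_mat d d" using assms rot_carrier[of g d] by auto
  then show "rot g *\<^sub>v 0\<^sub>v d = 0\<^sub>v d + 0\<^sub>m d d *\<^sub>v (euc_act g x0 - x0)"
    using assms(2) \<open>g \<in> R\<close> assms(1) eg_D[of g d]
    by (auto simp: mmv_zero euc_act_def intro!: eq_vecI)
qed (auto simp: skew_def)

lemma dist_Uiso_zero_iff:
  assumes R: "finite R" "R \<subseteq> euc_group d" and x0: "x0 \<in> carrier_vec d"
    and wc: "\<forall>h\<in>R. w h \<in> carrier_vec d"
  shows "dist_Uiso d x0 R w = 0 \<longleftrightarrow> w \<in> U_iso d x0 R"
proof -
  define Z where "Z = {sqrt (\<Sum>h\<in>R. \<Sum>i<d. (w h $ i - v h $ i)\<^sup>2) | v. v \<in> U_iso d x0 R}"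
  have Zpos: "z \<ge> 0" if "z \<in> Z" for z using that unfolding Z_def by (auto intro!: sum_nonneg)
  have Zne: "Z \<noteq> {}" using zero_in_Uiso[OF R(2) x0] unfolding Z_def by blast
  have bdd: "bdd_below Z" unfolding bdd_below_def using Zpos by blast
  have dZ: "dist_Uiso d x0 R w = Inf Z" unfolding dist_Uiso_def Z_def by simp
  show ?thesis
  proof
    assume "w \<in> U_iso d x0 R"
    then have "0 \<in> Z" unfolding Z_def by force
    then have "Inf Z = 0" using Zpos by (intro cInf_eq_minimum) auto
    then show "dist_Uiso d x0 R w = 0" using dZ by simp
  next
    assume d0: "dist_Uiso d x0 R w = 0"
    define I where "I = R \<times> {..<d}"
    define J :: "(nat + nat \<times> nat) set" where "J = Inl ` {..<d} \<union> Inr ` ({..<d} \<times> {..<d})"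
    define ww where "ww = (\<lambda>(h,i). w h $ i)"
    have approx: "\<forall>\<epsilon>>0. \<exists>c. (\<Sum>x\<in>I. (ww x - Phi d x0 c x)\<^sup>2) < \<epsilon>"
    proof (intro allI impI)
      fix e :: real assume e: "e > 0"
      have "Inf Z < sqrt e" using d0 dZ e by simp
      then obtain z where "z \<in> Z" "z < sqrt e" using cInf_lessD[OF Zne] by blast
      then obtain v where v: "v \<in> U_iso d x0 R"
        and lt: "sqrt (\<Sum>h\<in>R. \<Sum>i<d. (w h $ i - v h $ i)\<^sup>2) < sqrt e"
        unfolding Z_def by blast
      obtain c where c: "\<forall>h\<in>R. \<forall>i<d. v h $ i = Phi d x0 c (h, i)"
        using Uiso_Phi[OF v R(2) x0] by blast
      have "(\<Sum>h\<in>R. \<Sum>i<d. (w h $ i - v h $ i)\<^sup>2) = (\<Sum>h\<in>R. \<Sum>i<d. (ww (h,i) - Phi d x0 c (h,i))\<^sup>2)"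
        using c by (auto simp: ww_def intro!: sum.cong)
      also have "\<dots> = (\<Sum>x\<in>I. (ww x - Phi d x0 c x)\<^sup>2)"
        unfolding I_def sum.cartesian_product by (intro sum.cong) auto
      finally have "(\<Sum>x\<in>I. (ww x - Phi d x0 c x)\<^sup>2) = (\<Sum>h\<in>R. \<Sum>i<d. (w h $ i - v h $ i)\<^sup>2)" by simp
      also have "\<dots> < e" using lt by simp
      finally show "\<exists>c. (\<Sum>x\<in>I. (ww x - Phi d x0 c x)\<^sup>2) < e" by blast
    qed
    have "\<exists>c. \<forall>x\<in>I. ww x = Phi d x0 c x"
    proof (rule closed_lin[where J = J])
      show "finite I" using R(1) I_def by simp
      show "finite J" unfolding J_def by simp
    qed (auto simp: Phi_lin Phi_smul approx intro: Phi_supp simp: J_def)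
    then obtain c where c: "\<forall>x\<in>I. ww x = Phi d x0 c x" by blast
    show "w \<in> U_iso d x0 R"
      by (rule Phi_Uiso[OF R(2) x0 wc, of c]) (use c in \<open>auto simp: I_def ww_def\<close>)
  qed
qed

lemma conj_skew:
  assumes Q: "Q \<in> carrier_mat d d" and S: "S \<in> skew d"
  shows "Q * S * transpose_mat Q \<in> skew d"
proof -
  have Sc: "S \<in> carrier_mat d d" and ST: "transpose_mat S = - S" using S by (auto simp: skew_def)
  have "transpose_mat (Q * S * transpose_mat Q) = transpose_mat (transpose_mat Q) * transpose_mat (Q * S)"
    using Q Sc by (intro transpose_mult[of _ d d _ d]) auto
  also have "\<dots> = Q * (transpose_mat S * transpose_mat Q)"
    using Q Sc by (simp add: transpose_mult[of _ d d _ d])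
  also have "\<dots> = Q * (- S * transpose_mat Q)" using ST by simp
  also have "\<dots> = - (Q * S * transpose_mat Q)"
    using Q Sc by (simp add: assoc_mult_mat[of _ d d _ d _ d])
  finally show ?thesis unfolding skew_def using Q Sc by auto
qed

lemma local_to_global:
  assumes g: "g \<in> euc_group d" and R: "R \<subseteq> euc_group d" and x0: "x0 \<in> carrier_vec d"
    and uc: "\<forall>h\<in>R. u (euc_mult g h) \<in> carrier_vec d"
    and a: "a \<in> carrier_vec d" and S: "S \<in> skew d"
    and eq: "\<forall>h\<in>R. rot h *\<^sub>v u (euc_mult g h) = a + S *\<^sub>v (euc_act h x0 - x0)"
  shows "\<exists>a'\<in>carrier_vec d. \<exists>S'\<in>skew d. \<forall>h\<in>R.
     rot (euc_mult g h) *\<^sub>v u (euc_mult g h) = a' + S' *\<^sub>v (euc_act (euc_mult g h) x0 - x0)"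
proof -
  note Dg = eg_D[OF g]
  define Q where "Q = rot g"
  have Q: "Q \<in> carrier_mat d d" using Dg by (simp add: Q_def rot_def)
  have Sc: "S \<in> carrier_mat d d" using S by (auto simp: skew_def)
  define S' where "S' = Q * S * transpose_mat Q"
  have S'c: "S' \<in> carrier_mat d d" using Q Sc by (simp add: S'_def)
  define z where "z = euc_act g x0 - x0"
  have zc: "z \<in> carrier_vec d" using Dg x0 by (simp add: z_def euc_act_def)
  define a' where "a' = Q *\<^sub>v a - S' *\<^sub>v z"
  show ?thesis
  proof (intro bexI[of _ a'] bexI[of _ S'] ballI)
    show "a' \<in> carrier_vec d" using Q a S'c zc by (simp add: a'_def)
    show "S' \<in> skew d" unfolding S'_def by (rule conj_skew[OF Q S])
    fix h assume h: "h \<in> R"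
    have hg: "h \<in> euc_group d" using h R by auto
    note Dh = eg_D[OF hg]
    define y where "y = euc_act h x0 - x0"
    have yc: "y \<in> carrier_vec d" using Dh x0 by (simp add: y_def euc_act_def)
    have hx: "euc_act h x0 \<in> carrier_vec d" using Dh x0 by (simp add: euc_act_def)
    have ugh: "u (euc_mult g h) \<in> carrier_vec d" using uc h by auto
    have "rot (euc_mult g h) *\<^sub>v u (euc_mult g h) = Q *\<^sub>v (rot h *\<^sub>v u (euc_mult g h))"
      using Dg Dh ugh by (simp add: rot_def euc_mult_def Q_def assoc_mult_mat_vec[of _ d d _ d])
    also have "\<dots> = Q *\<^sub>v (a + S *\<^sub>v y)" using eq h y_def by simp
    also have "\<dots> = Q *\<^sub>v a + Q *\<^sub>v (S *\<^sub>v y)" using Q a Sc yc by (simp add: mult_add_distrib_mat_vec)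
    finally have L: "rot (euc_mult g h) *\<^sub>v u (euc_mult g h) = Q *\<^sub>v a + Q *\<^sub>v (S *\<^sub>v y)" .
    have "euc_act (euc_mult g h) x0 - x0 = (euc_act g (euc_act h x0) - euc_act g x0) + z"
      using euc_act_mult[of g d h x0] Dg Dh x0 hx unfolding z_def
      by (intro eq_vecI) (auto simp: euc_act_def)
    also have "euc_act g (euc_act h x0) - euc_act g x0 = Q *\<^sub>v y"
      using euc_act_diff[of g d "euc_act h x0" x0] Dg hx x0 by (simp add: Q_def rot_def y_def)
    finally have act: "euc_act (euc_mult g h) x0 - x0 = Q *\<^sub>v y + z" .
    have "S' *\<^sub>v (Q *\<^sub>v y) = Q *\<^sub>v (S *\<^sub>v y)"
    proof -
      have "S' *\<^sub>v (Q *\<^sub>v y) = (S' * Q) *\<^sub>v y" using S'c Q yc by (simp add: assoc_mult_mat_vec[of _ d d _ d])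
      also have "S' * Q = Q * S * (transpose_mat Q * Q)"
        using Q Sc unfolding S'_def by (simp add: assoc_mult_mat[of _ d d _ d _ d])
      also have "transpose_mat Q * Q = 1\<^sub>m d" using Dg by (simp add: Q_def rot_def)
      also have "(Q * S * 1\<^sub>m d) *\<^sub>v y = Q *\<^sub>v (S *\<^sub>v y)"
        using Q Sc yc by (simp add: assoc_mult_mat_vec[of _ d d _ d])
      finally show ?thesis .
    qed
    then have "a' + S' *\<^sub>v (euc_act (euc_mult g h) x0 - x0) = Q *\<^sub>v a + Q *\<^sub>v (S *\<^sub>v y)"
      unfolding act a'_def using S'c Q yc zc a
      by (simp add: mult_add_distrib_mat_vec[of _ d d]) (intro eq_vecI, auto)
    then show "rot (euc_mult g h) *\<^sub>v u (euc_mult g h) = a' + S' *\<^sub>v (euc_act (euc_mult g h) x0 - x0)"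
      using L by simp
  qed
qed

lemma global_to_local:
  assumes g: "g \<in> euc_group d" and R: "R \<subseteq> euc_group d" and x0: "x0 \<in> carrier_vec d"
    and uc: "\<forall>h\<in>R. u (euc_mult g h) \<in> carrier_vec d"
    and a: "a \<in> carrier_vec d" and S: "S \<in> skew d"
    and eq: "\<forall>h\<in>R. rot (euc_mult g h) *\<^sub>v u (euc_mult g h) = a + S *\<^sub>v (euc_act (euc_mult g h) x0 - x0)"
  shows "(\<lambda>h. u (euc_mult g h)) \<in> U_iso d x0 R"
proof -
  note Dg = eg_D[OF g]
  define Q where "Q = rot g"
  have Q: "Q \<in> carrier_mat d d" using Dg by (simp add: Q_def rot_def)
  have QT: "transpose_mat Q \<in> carrier_mat d d" using Q by simp
  have Sc: "S \<in> carrier_mat d d" using S by (auto simp: skew_def)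
  define S' where "S' = transpose_mat Q * S * Q"
  have S'c: "S' \<in> carrier_mat d d" using Q Sc by (simp add: S'_def)
  have S'sk: "S' \<in> skew d" using conj_skew[OF QT S] by (simp add: S'_def)
  define z where "z = euc_act g x0 - x0"
  have zc: "z \<in> carrier_vec d" using Dg x0 by (simp add: z_def euc_act_def)
  define a' where "a' = transpose_mat Q *\<^sub>v (a + S *\<^sub>v z)"
  show ?thesis unfolding U_iso_def
  proof (intro CollectI conjI bexI[of _ a'] bexI[of _ S'] ballI)
    show "a' \<in> carrier_vec d" using Q a Sc zc by (simp add: a'_def)
    show "S' \<in> skew d" by (rule S'sk)
    fix h assume h: "h \<in> R"
    show "u (euc_mult g h) \<in> carrier_vec d" using uc h by auto
    have hg: "h \<in> euc_group d" using h R by auto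
    note Dh = eg_D[OF hg]
    define y where "y = euc_act h x0 - x0"
    have yc: "y \<in> carrier_vec d" using Dh x0 by (simp add: y_def euc_act_def)
    have hx: "euc_act h x0 \<in> carrier_vec d" using Dh x0 by (simp add: euc_act_def)
    have ugh: "u (euc_mult g h) \<in> carrier_vec d" using uc h by auto
    have rh: "rot h *\<^sub>v u (euc_mult g h) \<in> carrier_vec d" using Dh ugh by (simp add: rot_def)
    have "rot (euc_mult g h) *\<^sub>v u (euc_mult g h) = Q *\<^sub>v (rot h *\<^sub>v u (euc_mult g h))"
      using Dg Dh ugh by (simp add: rot_def euc_mult_def Q_def assoc_mult_mat_vec[of _ d d _ d])
    then have "rot h *\<^sub>v u (euc_mult g h) = transpose_mat Q *\<^sub>v (rot (euc_mult g h) *\<^sub>v u (euc_mult g h))"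
      using orth_back[OF g rh] by (simp add: Q_def)
    also have "\<dots> = transpose_mat Q *\<^sub>v (a + S *\<^sub>v (euc_act (euc_mult g h) x0 - x0))"
      using eq h by simp
    also have "euc_act (euc_mult g h) x0 - x0 = (euc_act g (euc_act h x0) - euc_act g x0) + z"
      using euc_act_mult[of g d h x0] Dg Dh x0 hx unfolding z_def
      by (intro eq_vecI) (auto simp: euc_act_def)
    also have "euc_act g (euc_act h x0) - euc_act g x0 = Q *\<^sub>v y"
      using euc_act_diff[of g d "euc_act h x0" x0] Dg hx x0 by (simp add: Q_def rot_def y_def)
    also have "transpose_mat Q *\<^sub>v (a + S *\<^sub>v (Q *\<^sub>v y + z)) = a' + S' *\<^sub>v y"
    proof -
      have "S *\<^sub>v (Q *\<^sub>v y + z) = S *\<^sub>v (Q *\<^sub>v y) + S *\<^sub>v z"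
        using Sc Q yc zc by (simp add: mult_add_distrib_mat_vec[of _ d d])
      moreover have "transpose_mat Q *\<^sub>v (S *\<^sub>v (Q *\<^sub>v y)) = S' *\<^sub>v y"
        using Q Sc yc by (simp add: S'_def assoc_mult_mat_vec[of _ d d _ d] assoc_mult_mat[of _ d d _ d _ d])
      ultimately show ?thesis unfolding a'_def using Q Sc yc zc a S'c
        by (simp add: mult_add_distrib_mat_vec[of _ d d]) (intro eq_vecI, auto)
    qed
    finally show "rot h *\<^sub>v u (euc_mult g h) = a' + S' *\<^sub>v (euc_act h x0 - x0)" by (simp add: y_def)
  qed
qed

lemma aff_comb:
  fixes M :: "real mat"
  assumes M: "M \<in> carrier_mat d d" and b: "b \<in> carrier_vec d" and F: "finite F"
    and c1: "sum c F = 1" and phi: "\<forall>x\<in>F. \<phi> x \<in> carrier_vec d" and y: "y \<in> carrier_vec d"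
    and comb: "\<forall>i<d. y $ i = (\<Sum>x\<in>F. c x * \<phi> x $ i)" and i: "i < d"
  shows "(M *\<^sub>v y + b) $ i = (\<Sum>x\<in>F. c x * (M *\<^sub>v \<phi> x + b) $ i)"
proof -
  have "(M *\<^sub>v y) $ i = (\<Sum>k<d. M $$ (i,k) * y $ k)" by (rule mmv_index[OF M y i])
  then have "(M *\<^sub>v y + b) $ i = (\<Sum>k<d. M $$ (i,k) * y $ k) + b $ i"
    using M y b i by simp
  also have "\<dots> = (\<Sum>k<d. M $$ (i,k) * (\<Sum>x\<in>F. c x * \<phi> x $ k)) + (\<Sum>x\<in>F. c x) * b $ i"
    using comb c1 by simp
  also have "\<dots> = (\<Sum>x\<in>F. c x * ((\<Sum>k<d. M $$ (i,k) * \<phi> x $ k) + b $ i))"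
    by (simp add: sum_distrib_left sum_distrib_right distrib_left sum.distrib algebra_simps
          sum.swap[of _ "{..<d}" F])
  also have "\<dots> = (\<Sum>x\<in>F. c x * (M *\<^sub>v \<phi> x + b) $ i)"
    using mmv_index[OF M _ i] phi b i by (intro sum.cong refl) simp
  finally show ?thesis .
qed

lemma aff_agree:
  fixes M1 M2 :: "real mat"
  assumes M1: "M1 \<in> carrier_mat d d" and b1: "b1 \<in> carrier_vec d"
    and M2: "M2 \<in> carrier_mat d d" and b2: "b2 \<in> carrier_vec d" and F: "finite F"
    and c1: "sum c F = 1" and phi: "\<forall>x\<in>F. \<phi> x \<in> carrier_vec d" and y: "y \<in> carrier_vec d"
    and comb: "\<forall>i<d. y $ i = (\<Sum>x\<in>F. c x * \<phi> x $ i)"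
    and agree: "\<forall>x\<in>F. M1 *\<^sub>v \<phi> x + b1 = M2 *\<^sub>v \<phi> x + b2"
  shows "M1 *\<^sub>v y + b1 = M2 *\<^sub>v y + b2"
proof (rule eq_vecI)
  fix i assume "i < dim_vec (M2 *\<^sub>v y + b2)"
  then have i: "i < d" using b2 by simp
  show "(M1 *\<^sub>v y + b1) $ i = (M2 *\<^sub>v y + b2) $ i"
    using aff_comb[OF M1 b1 F c1 phi y comb i] aff_comb[OF M2 b2 F c1 phi y comb i] agree by simp
qed (use M1 M2 b1 b2 in auto)

lemma aff_form:
  fixes S :: "real mat"
  assumes "a \<in> carrier_vec d" "S \<in> carrier_mat d d" "z \<in> carrier_vec d" "x0 \<in> carrier_vec d"
  shows "a + S *\<^sub>v (z - x0) = S *\<^sub>v z + (a - S *\<^sub>v x0)"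
proof -
  have "S *\<^sub>v (z - x0) = S *\<^sub>v z - S *\<^sub>v x0" by (rule mult_minus_distrib_mat_vec[of _ d d]) (use assms in auto)
  then show ?thesis using assms by (intro eq_vecI) auto
qed

lemma subgroup_D:
  assumes "euc_subgroup d G"
  shows "G \<subseteq> euc_group d" "euc_id d \<in> G" "\<And>g h. g \<in> G \<Longrightarrow> h \<in> G \<Longrightarrow> euc_mult g h \<in> G"
    "\<And>g. g \<in> G \<Longrightarrow> euc_inv g \<in> G"
  using assms unfolding euc_subgroup_def by auto

lemma gluing:
  assumes Gs: "euc_subgroup d G" and x0: "x0 \<in> carrier_vec d"
    and uc: "\<forall>g\<in>G. u g \<in> carrier_vec d"
    and R'G: "R' \<subseteq> G" and gen: "euc_gen d R' = G"
    and P1: "property1 d G x0 R''"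
    and RR: "{euc_mult g h | g h. g \<in> R' \<and> h \<in> R''} \<subseteq> R" and idR': "euc_id d \<in> R'"
    and RG: "R \<subseteq> G"
    and loc: "\<forall>g\<in>G. \<exists>a\<in>carrier_vec d. \<exists>S\<in>skew d. \<forall>h\<in>R.
        rot (euc_mult g h) *\<^sub>v u (euc_mult g h) = a + S *\<^sub>v (euc_act (euc_mult g h) x0 - x0)"
  shows "\<exists>a\<in>carrier_vec d. \<exists>S\<in>skew d. \<forall>k\<in>G. rot k *\<^sub>v u k = a + S *\<^sub>v (euc_act k x0 - x0)"
proof -
  note GD = subgroup_D[OF Gs]
  have Ge: "g \<in> euc_group d" if "g \<in> G" for g using GD(1) that by auto
  have R''G: "R'' \<subseteq> G" and idR'': "euc_id d \<in> R''" and R''fin: "finite R''"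
    and aff: "aff_hull d ((\<lambda>g. euc_act g x0) ` R'') = aff_hull d ((\<lambda>g. euc_act g x0) ` G)"
    using P1 unfolding property1_def by auto
  define P where "P = (\<lambda>g p. fst p \<in> carrier_vec d \<and> snd p \<in> skew d \<and> (\<forall>h\<in>R.
        rot (euc_mult g h) *\<^sub>v u (euc_mult g h) = fst p + snd p *\<^sub>v (euc_act (euc_mult g h) x0 - x0)))"
  define AS where "AS = (\<lambda>g. SOME p. P g p)"
  have ASP: "P g (AS g)" if "g \<in> G" for g
  proof -
    from loc that obtain a S where "a \<in> carrier_vec d" "S \<in> skew d" "\<forall>h\<in>R.
        rot (euc_mult g h) *\<^sub>v u (euc_mult g h) = a + S *\<^sub>v (euc_act (euc_mult g h) x0 - x0)" by blast
    then have "P g (a, S)" unfolding P_def by simp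
    then show ?thesis unfolding AS_def by (rule someI)
  qed
  define A where "A = (\<lambda>g. fst (AS g))"
  define Sm where "Sm = (\<lambda>g. snd (AS g))"
  have Ac: "A g \<in> carrier_vec d" and Sc: "Sm g \<in> carrier_mat d d" and Ssk: "Sm g \<in> skew d"
    and Aeq: "\<forall>h\<in>R. rot (euc_mult g h) *\<^sub>v u (euc_mult g h) = A g + Sm g *\<^sub>v (euc_act (euc_mult g h) x0 - x0)"
    if "g \<in> G" for g
    using ASP[OF that] unfolding A_def Sm_def P_def skew_def by blast+
  have actc: "euc_act k x0 \<in> carrier_vec d" if "k \<in> G" for k
    using eg_D[OF Ge[OF that]] x0 by (simp add: euc_act_def)
  have key: "A g + Sm g *\<^sub>v (euc_act k x0 - x0) = A (euc_mult g r) + Sm (euc_mult g r) *\<^sub>v (euc_act k x0 - x0)"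
    if g: "g \<in> G" and r: "r \<in> R'" and k: "k \<in> G" for g r k
  proof -
    have rG: "r \<in> G" using r R'G by auto
    define q where "q = euc_mult g r"
    have qG: "q \<in> G" using GD g rG by (simp add: q_def)
    note Dg = eg_D[OF Ge[OF g]] and Dr = eg_D[OF Ge[OF rG]] and Dq = eg_D[OF Ge[OF qG]]
    have agree: "Sm g *\<^sub>v euc_act q y + (A g - Sm g *\<^sub>v x0)
        = Sm q *\<^sub>v euc_act q y + (A q - Sm q *\<^sub>v x0)"
      if y: "y \<in> (\<lambda>g. euc_act g x0) ` R''" for y
    proof -
      obtain h where h: "h \<in> R''" and yh: "y = euc_act h x0" using y by auto
      have hG: "h \<in> G" using h R''G by auto
      note Dh = eg_D[OF Ge[OF hG]]
      have rh: "euc_mult r h \<in> R" using RR r h by blast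
      have ih: "euc_mult (euc_id d) h \<in> R" using RR idR' h by blast
      then have hR: "h \<in> R" using euc_id_mult[OF Dh(1,2)] by simp
      have qh: "euc_mult q h = euc_mult g (euc_mult r h)"
        unfolding q_def using euc_mult_assoc[OF Dg(1,2) Dr(1,2) Dh(1,2)] .
      have qhG: "euc_mult q h \<in> G" using GD qG hG by simp
      have e1: "rot (euc_mult q h) *\<^sub>v u (euc_mult q h) = A g + Sm g *\<^sub>v (euc_act (euc_mult q h) x0 - x0)"
        using Aeq[OF g] rh qh by simp
      have e2: "rot (euc_mult q h) *\<^sub>v u (euc_mult q h) = A q + Sm q *\<^sub>v (euc_act (euc_mult q h) x0 - x0)"
        using Aeq[OF qG] hR by simp
      have "euc_act (euc_mult q h) x0 = euc_act q y"
        using euc_act_mult[OF Dq(1,2) Dh(1,2) x0] yh by simp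
      then show ?thesis using e1 e2 aff_form[OF Ac[OF g] Sc[OF g] actc[OF qhG] x0]
          aff_form[OF Ac[OF qG] Sc[OF qG] actc[OF qhG] x0] by simp
    qed
    define m where "m = euc_mult (euc_inv q) k"
    have mG: "m \<in> G" using GD qG k by (simp add: m_def)
    have km: "euc_act k x0 = euc_act q (euc_act m x0)"
    proof -
      have "euc_mult q m = k"
        unfolding m_def using euc_mult_assoc[of q d "euc_inv q" k] Dq eg_D[OF Ge[OF GD(4)[OF qG]]]
          eg_D[OF Ge[OF k]] euc_inv_right[OF Ge[OF qG]] euc_id_mult[of k d] by simp
      then show ?thesis using euc_act_mult[OF Dq(1,2) eg_D(1,2)[OF Ge[OF mG]] x0] by simp
    qed
    have "\<exists>F c. finite F \<and> F \<subseteq> (\<lambda>g. euc_act g x0) ` G \<and> sum c F = 1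
        \<and> (\<forall>i<d. euc_act m x0 $ i = (\<Sum>x\<in>F. c x * x $ i))"
      by (rule exI[of _ "{euc_act m x0}"], rule exI[of _ "\<lambda>_. 1"]) (use mG in auto)
    then have "euc_act m x0 \<in> aff_hull d ((\<lambda>g. euc_act g x0) ` G)"
      unfolding aff_hull_def using actc[OF mG] by simp
    then have "euc_act m x0 \<in> aff_hull d ((\<lambda>g. euc_act g x0) ` R'')" using aff by simp
    then have "\<exists>F c. finite F \<and> F \<subseteq> (\<lambda>g. euc_act g x0) ` R'' \<and> sum c F = 1
        \<and> (\<forall>i<d. euc_act m x0 $ i = (\<Sum>x\<in>F. c x * x $ i))"
      unfolding aff_hull_def by simp
    then obtain F c where F: "finite F" "F \<subseteq> (\<lambda>g. euc_act g x0) ` R''" "sum c F = 1"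
      and comb: "\<forall>i<d. euc_act m x0 $ i = (\<Sum>x\<in>F. c x * x $ i)"
      by (elim exE conjE) simp
    have Fc: "\<forall>x\<in>F. x \<in> carrier_vec d"
    proof
      fix x assume "x \<in> F"
      then obtain h where "h \<in> R''" "x = euc_act h x0" using F(2) by blast
      then show "x \<in> carrier_vec d" using R''G actc by blast
    qed
    have comb2: "\<forall>i<d. euc_act k x0 $ i = (\<Sum>x\<in>F. c x * euc_act q x $ i)"
    proof (intro allI impI)
      fix i assume i: "i < d"
      show "euc_act k x0 $ i = (\<Sum>x\<in>F. c x * euc_act q x $ i)"
        using aff_comb[OF Dq(1,2) F(1) F(3), of id "euc_act m x0", OF _ actc[OF mG] _ i] Fc comb km
        by (simp add: euc_act_def)
    qed
    have qc: "\<forall>x\<in>F. euc_act q x \<in> carrier_vec d" using Fc Dq by (simp add: euc_act_def)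
    have "Sm g *\<^sub>v euc_act k x0 + (A g - Sm g *\<^sub>v x0) = Sm q *\<^sub>v euc_act k x0 + (A q - Sm q *\<^sub>v x0)"
      using Ac[OF g] Ac[OF qG] Sc[OF g] Sc[OF qG] x0 agree F(2) by (intro aff_agree[OF Sc[OF g] _ Sc[OF qG] _ F(1) F(3) qc actc[OF k] comb2]) auto
    then show ?thesis using aff_form[OF Ac[OF g] Sc[OF g] actc[OF k] x0]
          aff_form[OF Ac[OF qG] Sc[OF qG] actc[OF k] x0] by (simp add: q_def)
  qed
  have ind: "\<forall>g\<in>G. \<forall>k'\<in>G. A g + Sm g *\<^sub>v (euc_act k' x0 - x0) = A (euc_mult g k) + Sm (euc_mult g k) *\<^sub>v (euc_act k' x0 - x0)"
    if "k \<in> euc_gen d R'" for k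
    using that
  proof (induction k rule: euc_gen.induct)
    case gen_id
    show ?case
    proof (intro ballI)
      fix g k' assume g: "g \<in> G" and k': "k' \<in> G"
      have "euc_mult g (euc_id d) = g" using euc_mult_id[OF eg_D(1,2)[OF Ge[OF g]]] .
      then show "A g + Sm g *\<^sub>v (euc_act k' x0 - x0) = A (euc_mult g (euc_id d)) + Sm (euc_mult g (euc_id d)) *\<^sub>v (euc_act k' x0 - x0)"
        by simp
    qed
  next
    case (gen_base x)
    then show ?case using key by blast
  next
    case (gen_mult k1 k2)
    have k1: "k1 \<in> G" and k2: "k2 \<in> G" using gen_mult.hyps gen by auto
    show ?case
    proof (intro ballI)
      fix g k' assume g: "g \<in> G" and k': "k' \<in> G"
      have gk1: "euc_mult g k1 \<in> G" using GD g k1 by simp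
      have eq: "euc_mult (euc_mult g k1) k2 = euc_mult g (euc_mult k1 k2)"
        using euc_mult_assoc[OF eg_D(1,2)[OF Ge[OF g]] eg_D(1,2)[OF Ge[OF k1]] eg_D(1,2)[OF Ge[OF k2]]] .
      show "A g + Sm g *\<^sub>v (euc_act k' x0 - x0) = A (euc_mult g (euc_mult k1 k2)) + Sm (euc_mult g (euc_mult k1 k2)) *\<^sub>v (euc_act k' x0 - x0)"
        using gen_mult.IH(1)[rule_format, OF g k'] gen_mult.IH(2)[rule_format, OF gk1 k'] eq by simp
    qed
  next
    case (gen_inv k)
    have k: "k \<in> G" using gen_inv.hyps gen by auto
    show ?case
    proof (intro ballI)
      fix g k' assume g: "g \<in> G" and k': "k' \<in> G"
      have g': "euc_mult g (euc_inv k) \<in> G" using GD g k by simp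
      have "euc_mult (euc_mult g (euc_inv k)) k = euc_mult g (euc_mult (euc_inv k) k)"
        using euc_mult_assoc[OF eg_D(1,2)[OF Ge[OF g]] eg_D(1,2)[OF Ge[OF GD(4)[OF k]]] eg_D(1,2)[OF Ge[OF k]]] .
      also have "\<dots> = g" using euc_inv_left[OF Ge[OF k]] euc_mult_id[OF eg_D(1,2)[OF Ge[OF g]]] by simp
      finally have eq: "euc_mult (euc_mult g (euc_inv k)) k = g" .
      show "A g + Sm g *\<^sub>v (euc_act k' x0 - x0) = A (euc_mult g (euc_inv k)) + Sm (euc_mult g (euc_inv k)) *\<^sub>v (euc_act k' x0 - x0)"
        using gen_inv.IH[rule_format, OF g' k'] eq by simp
    qed
  qed
  show ?thesis
  proof (intro bexI[of _ "A (euc_id d)"] bexI[of _ "Sm (euc_id d)"] ballI)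
    fix k assume k: "k \<in> G"
    have "euc_mult (euc_id d) (euc_id d) \<in> R" using RR idR' idR'' by blast
    moreover have "euc_mult (euc_id d) (euc_id d) = euc_id d" by (simp add: euc_mult_def euc_id_def)
    ultimately have idR: "euc_id d \<in> R" by simp
    have kk: "euc_mult k (euc_id d) = k" using euc_mult_id[OF eg_D(1,2)[OF Ge[OF k]]] .
    have "rot (euc_mult k (euc_id d)) *\<^sub>v u (euc_mult k (euc_id d)) = A k + Sm k *\<^sub>v (euc_act (euc_mult k (euc_id d)) x0 - x0)"
      using Aeq[OF k] idR by blast
    then have "rot k *\<^sub>v u k = A k + Sm k *\<^sub>v (euc_act k x0 - x0)" using kk by simp
    also have "\<dots> = A (euc_id d) + Sm (euc_id d) *\<^sub>v (euc_act k x0 - x0)"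
      using ind[of k, rule_format, OF _ GD(2) k] gen k euc_id_mult[OF eg_D(1,2)[OF Ge[OF k]]] by simp
    finally show "rot k *\<^sub>v u k = A (euc_id d) + Sm (euc_id d) *\<^sub>v (euc_act k x0 - x0)" .
  qed (use Ac Ssk GD(2) in auto)
qed

lemma sum_split_add: "(\<Sum>k<n+(m::nat). f k) = (\<Sum>k<n. f k) + (\<Sum>k<m. f (n+k))"
  by (induction m) (auto simp: add.assoc)

lemma pow_props:
  fixes t :: euc
  assumes t1: "fst t \<in> carrier_mat d d" and t2: "snd t \<in> carrier_vec d"
    and tfix: "fst t *\<^sub>v snd t = snd t"
  shows "fst (euc_pow d t n) \<in> carrier_mat d d \<and> snd (euc_pow d t n) = of_nat n \<cdot>\<^sub>v snd t
     \<and> fst (euc_pow d t n) *\<^sub>v snd t = snd t"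
proof (induction n)
  case 0
  then show ?case using t2 by (auto simp: euc_id_def intro!: eq_vecI)
next
  case (Suc n)
  then have c: "fst (euc_pow d t n) \<in> carrier_mat d d" and s: "snd (euc_pow d t n) = of_nat n \<cdot>\<^sub>v snd t"
    and f: "fst (euc_pow d t n) *\<^sub>v snd t = snd t" by auto
  have "fst t *\<^sub>v (of_nat n \<cdot>\<^sub>v snd t) = of_nat n \<cdot>\<^sub>v (fst t *\<^sub>v snd t)"
    by (rule mult_mat_vec[OF t1 t2])
  then have s2: "snd t + fst t *\<^sub>v snd (euc_pow d t n) = of_nat (Suc n) \<cdot>\<^sub>v snd t"
    using s tfix t2 by (intro eq_vecI) (auto simp: algebra_simps)
  have "(fst t * fst (euc_pow d t n)) *\<^sub>v snd t = fst t *\<^sub>v (fst (euc_pow d t n) *\<^sub>v snd t)"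
    using t1 c t2 by (simp add: assoc_mult_mat_vec[of _ d d _ d])
  then have f2: "(fst t * fst (euc_pow d t n)) *\<^sub>v snd t = snd t" using f tfix by simp
  show ?case using c t1 s2 f2 by (simp add: euc_mult_def)
qed

lemma subgroup_pow:
  assumes "euc_subgroup d K" "M \<in> K"
  shows "euc_pow d M k \<in> K"
  using assms by (induction k) (auto simp: euc_subgroup_def)

lemma orth_entry_le:
  fixes Q :: "real mat"
  assumes Q: "Q \<in> carrier_mat d d" and QQ: "transpose_mat Q * Q = 1\<^sub>m d" and ij: "i < d" "j < d"
  shows "\<bar>Q $$ (i,j)\<bar> \<le> 1"
proof -
  have "(transpose_mat Q * Q) $$ (j,j) = 1" using QQ ij by simp
  moreover have "(transpose_mat Q * Q) $$ (j,j) = (\<Sum>k<d. Q $$ (k,j) * Q $$ (k,j))"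
    using Q ij by (auto simp: scalar_prod_def lessThan_atLeast0 intro!: sum.cong)
  ultimately have s: "(\<Sum>k<d. (Q $$ (k,j))\<^sup>2) = 1" by (simp add: power2_eq_square)
  have "(Q $$ (i,j))\<^sup>2 \<le> (\<Sum>k<d. (Q $$ (k,j))\<^sup>2)"
    using ij by (intro member_le_sum) auto
  then have "(Q $$ (i,j))\<^sup>2 \<le> 1" using s by simp
  then show ?thesis using abs_le_square_iff[of "Q $$ (i,j)" 1] by simp
qed

lemma orth_mv_bound:
  fixes Q :: "real mat"
  assumes Q: "Q \<in> carrier_mat d d" and QQ: "transpose_mat Q * Q = 1\<^sub>m d" and v: "v \<in> carrier_vec d"
    and i: "i < d"
  shows "\<bar>(Q *\<^sub>v v) $ i\<bar> \<le> (\<Sum>k<d. \<bar>v $ k\<bar>)"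
proof -
  have "\<bar>(Q *\<^sub>v v) $ i\<bar> = \<bar>\<Sum>k<d. Q $$ (i,k) * v $ k\<bar>" using mmv_index[OF Q v i] by simp
  also have "\<dots> \<le> (\<Sum>k<d. \<bar>Q $$ (i,k) * v $ k\<bar>)" by (rule sum_abs)
  also have "\<dots> \<le> (\<Sum>k<d. \<bar>v $ k\<bar>)"
  proof (rule sum_mono)
    fix k assume "k \<in> {..<d}"
    then have "\<bar>Q $$ (i,k)\<bar> \<le> 1" using orth_entry_le[OF Q QQ i] by simp
    then show "\<bar>Q $$ (i,k) * v $ k\<bar> \<le> \<bar>v $ k\<bar>"
      by (simp add: abs_mult mult_left_le_one_le)
  qed
  finally show ?thesis .
qed

lemma mv_bound:
  fixes W :: "real mat"
  assumes W: "W \<in> carrier_mat d d" and v: "v \<in> carrier_vec d" and i: "i < d"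
    and vb: "\<forall>k<d. \<bar>v $ k\<bar> \<le> B"
  shows "\<bar>(W *\<^sub>v v) $ i\<bar> \<le> (\<Sum>k<d. \<bar>W $$ (i,k)\<bar>) * B"
proof -
  have "\<bar>(W *\<^sub>v v) $ i\<bar> = \<bar>\<Sum>k<d. W $$ (i,k) * v $ k\<bar>" using mmv_index[OF W v i] by simp
  also have "\<dots> \<le> (\<Sum>k<d. \<bar>W $$ (i,k) * v $ k\<bar>)" by (rule sum_abs)
  also have "\<dots> \<le> (\<Sum>k<d. \<bar>W $$ (i,k)\<bar> * B)"
    using vb by (intro sum_mono) (simp add: abs_mult mult_left_mono)
  also have "\<dots> = (\<Sum>k<d. \<bar>W $$ (i,k)\<bar>) * B" by (simp add: sum_distrib_right)
  finally show ?thesis .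
qed

lemma bounded_multiple_zero:
  fixes x :: real
  assumes "\<forall>k::nat. \<bar>of_nat k * x\<bar> \<le> B"
  shows "x = 0"
proof (rule ccontr)
  assume "x \<noteq> 0"
  then have ax: "\<bar>x\<bar> > 0" by simp
  obtain k :: nat where k: "of_nat k > B / \<bar>x\<bar>" using reals_Archimedean2 by blast
  then have "of_nat k * \<bar>x\<bar> > B" using ax by (simp add: field_simps)
  moreover have "\<bar>of_nat k * x\<bar> = of_nat k * \<bar>x\<bar>" by (simp add: abs_mult)
  ultimately show False using assms by (metis not_le)
qed

lemma kill1:
  fixes W :: "real mat"
  assumes Gs: "euc_subgroup d G" and x0: "x0 \<in> carrier_vec d"
    and W: "W \<in> carrier_mat d d" and a: "a \<in> carrier_vec d"
    and glob: "\<forall>k\<in>G. rot k *\<^sub>v u k = a + W *\<^sub>v (euc_act k x0 - x0)"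
    and uc: "\<forall>g\<in>G. u g \<in> carrier_vec d"
    and K: "euc_subgroup d K" "K \<subseteq> G" and per: "\<forall>t\<in>K. u (euc_mult (euc_id d) t) = u (euc_id d)"
    and M: "M \<in> K" and Mfix: "fst M *\<^sub>v snd M = snd M"
  shows "W *\<^sub>v snd M = 0\<^sub>v d"
proof -
  note GD = subgroup_D[OF Gs]
  have MG: "M \<in> G" using M K by auto
  note DM = eg_D[OF GD(1)[THEN subsetD, OF MG]]
  define s where "s = snd M"
  have sc: "s \<in> carrier_vec d" using DM s_def by simp
  define u0 where "u0 = u (euc_id d)"
  have u0c: "u0 \<in> carrier_vec d" using uc GD(2) u0_def by auto
  define Bx where "Bx = (\<Sum>k<d. \<bar>x0 $ k\<bar>)"
  have comp: "\<bar>of_nat k * (W *\<^sub>v s) $ i\<bar> \<le> (\<Sum>k<d. \<bar>u0 $ k\<bar>) + \<bar>a $ i\<bar> + (\<Sum>k<d. \<bar>W $$ (i,k)\<bar>) * Bx + \<bar>(W *\<^sub>v x0) $ i\<bar>"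
    if i: "i < d" for i k
  proof -
    define Mk where "Mk = euc_pow d M k"
    have MkK: "Mk \<in> K" unfolding Mk_def by (rule subgroup_pow[OF K(1) M])
    have MkG: "Mk \<in> G" using MkK K by auto
    have Mke: "Mk \<in> euc_group d" using GD(1) MkG by auto
    note DMk = eg_D[OF Mke]
    have snMk: "snd Mk = of_nat k \<cdot>\<^sub>v s"
      using pow_props[OF DM(1,2) Mfix, of k] unfolding Mk_def s_def by simp
    have "u Mk = u (euc_mult (euc_id d) Mk)" using euc_id_mult[OF DMk(1,2)] by simp
    also have "\<dots> = u0" using per MkK u0_def by simp
    finally have uMk: "u Mk = u0" .
    define p where "p = fst Mk *\<^sub>v x0"
    have pc: "p \<in> carrier_vec d" using DMk x0 p_def by simp
    have eq: "rot Mk *\<^sub>v u0 = a + W *\<^sub>v (p + of_nat k \<cdot>\<^sub>v s - x0)"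
      using glob[rule_format, OF MkG] uMk snMk by (simp add: euc_act_def p_def)
    have "W *\<^sub>v (p + of_nat k \<cdot>\<^sub>v s - x0) = W *\<^sub>v (p + of_nat k \<cdot>\<^sub>v s) - W *\<^sub>v x0"
      using W pc sc x0 by (intro mult_minus_distrib_mat_vec) auto
    also have "W *\<^sub>v (p + of_nat k \<cdot>\<^sub>v s) = W *\<^sub>v p + W *\<^sub>v (of_nat k \<cdot>\<^sub>v s)"
      using W pc sc by (intro mult_add_distrib_mat_vec) auto
    also have "W *\<^sub>v (of_nat k \<cdot>\<^sub>v s) = of_nat k \<cdot>\<^sub>v (W *\<^sub>v s)" by (rule mult_mat_vec[OF W sc])
    finally have Wexp: "W *\<^sub>v (p + of_nat k \<cdot>\<^sub>v s - x0) = W *\<^sub>v p + of_nat k \<cdot>\<^sub>v (W *\<^sub>v s) - W *\<^sub>v x0" .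
    have "(rot Mk *\<^sub>v u0) $ i = a $ i + (W *\<^sub>v p) $ i + of_nat k * (W *\<^sub>v s) $ i - (W *\<^sub>v x0) $ i"
      using eq Wexp i W pc sc x0 a by simp
    then have ke: "of_nat k * (W *\<^sub>v s) $ i = (rot Mk *\<^sub>v u0) $ i - a $ i - (W *\<^sub>v p) $ i + (W *\<^sub>v x0) $ i"
      by simp
    have b1: "\<bar>(rot Mk *\<^sub>v u0) $ i\<bar> \<le> (\<Sum>k<d. \<bar>u0 $ k\<bar>)"
      using orth_mv_bound[OF DMk(1) DMk(3) u0c i] by (simp add: rot_def)
    have pb: "\<forall>j<d. \<bar>p $ j\<bar> \<le> Bx"
      using orth_mv_bound[OF DMk(1) DMk(3) x0] by (simp add: p_def Bx_def)
    have b2: "\<bar>(W *\<^sub>v p) $ i\<bar> \<le> (\<Sum>k<d. \<bar>W $$ (i,k)\<bar>) * Bx"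
      by (rule mv_bound[OF W pc i pb])
    show ?thesis using ke b1 b2 by linarith
  qed
  have "W *\<^sub>v s = 0\<^sub>v d"
  proof (rule eq_vecI)
    fix i assume "i < dim_vec (0\<^sub>v d :: real vec)"
    then have i: "i < d" by simp
    have "(W *\<^sub>v s) $ i = 0" using comp[OF i] by (intro bounded_multiple_zero) blast
    then show "(W *\<^sub>v s) $ i = 0\<^sub>v d $ i" using i by simp
  qed (use W in simp)
  then show ?thesis by (simp add: s_def)
qed

lemma proj2_dsum:
  assumes A: "A \<in> carrier_mat d1 d1" and s: "fst s \<in> carrier_mat d2 d2" "snd s \<in> carrier_vec d2"
  shows "proj2 d1 d2 (dsum d1 d2 A s) = s"
proof -
  have "mat d2 d2 (\<lambda>(i,j). fst (dsum d1 d2 A s) $$ (d1 + i, d1 + j)) = fst s"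
    using A s by (intro eq_matI) (auto simp: dsum_def)
  moreover have "vec d2 (\<lambda>i. snd (dsum d1 d2 A s) $ (d1 + i)) = snd s"
    using A s by (intro eq_vecI) (auto simp: dsum_def)
  ultimately show ?thesis by (cases s) (simp add: proj2_def)
qed

lemma unit_col: "B \<in> carrier_mat n n \<Longrightarrow> j < n \<Longrightarrow> l < n \<Longrightarrow> (B *\<^sub>v unit_vec n l) $ j = (B $$ (j,l) :: real)"
  by (simp add: mmv_index[of _ n n] if_distrib cong: if_cong)

lemma W_append:
  fixes W :: "real mat"
  assumes W: "W \<in> carrier_mat (d1+d2) (d1+d2)" and tau: "tau \<in> carrier_vec d2" and i: "i < d1 + d2"
  shows "(W *\<^sub>v (0\<^sub>v d1 @\<^sub>v tau)) $ i = (\<Sum>j<d2. W $$ (i, d1 + j) * tau $ j)"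
proof -
  have "(W *\<^sub>v (0\<^sub>v d1 @\<^sub>v tau)) $ i = (\<Sum>k<d1+d2. W $$ (i,k) * (0\<^sub>v d1 @\<^sub>v tau) $ k)"
    using W tau i by (intro mmv_index) auto
  also have "\<dots> = (\<Sum>k<d1. W $$ (i,k) * (0\<^sub>v d1 @\<^sub>v tau) $ k) + (\<Sum>j<d2. W $$ (i,d1+j) * (0\<^sub>v d1 @\<^sub>v tau) $ (d1+j))"
    by (rule sum_split_add)
  also have "\<dots> = (\<Sum>j<d2. W $$ (i, d1 + j) * tau $ j)"
    using tau by simp
  finally show ?thesis .
qed

lemma block_struct:
  fixes W :: "real mat"
  assumes setting: "standing_setting d1 d2 Sg G T m0 C x0 daff"
    and N: "N \<ge> 1" "m0 dvd N" and per: "periodic (d1+d2) G T N u"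
    and a: "a \<in> carrier_vec (d1+d2)" and W: "W \<in> skew (d1+d2)"
    and glob: "\<forall>k\<in>G. rot k *\<^sub>v u k = a + W *\<^sub>v (euc_act k x0 - x0)"
  shows "\<exists>S1\<in>skew d1. W = four_block_mat S1 (0\<^sub>m d1 d2) (0\<^sub>m d2 d1) (0\<^sub>m d2 d2)"
proof -
  define d where "d = d1 + d2"
  have sg: "space_group d2 Sg" and Gd: "euc_discrete_subgroup d G"
    and Gsub: "G \<subseteq> {dsum d1 d2 A s | A s. A \<in> orth_group d1 \<and> s \<in> Sg}"
    and TG: "T \<subseteq> G" and bij: "bij_betw (proj2 d1 d2) T (transl_subgroup d2 Sg)"
    and norm: "\<forall>N\<ge>1. euc_normal d (pow_set d T N) G \<longleftrightarrow> m0 dvd N"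
    and x0: "x0 \<in> carrier_vec d"
    using setting unfolding standing_setting_def d_def
    apply - apply (elim conjE, assumption)+ done
  have Gs: "euc_subgroup d G" using Gd unfolding euc_discrete_subgroup_def by (rule conjunct1)
  note GD = subgroup_D[OF Gs]
  define K where "K = pow_set d T N"
  have Kn: "euc_normal d K G" unfolding K_def using norm[rule_format, OF N(1)] N(2) by (rule iffD2)
  have Ks: "euc_subgroup d K" and KG: "K \<subseteq> G" using Kn unfolding euc_normal_def by auto
  have uc: "\<forall>g\<in>G. u g \<in> carrier_vec d" and uper: "\<forall>g\<in>G. \<forall>t\<in>K. u (euc_mult g t) = u g"
    using per unfolding periodic_def K_def d_def by auto
  have per0: "\<forall>t\<in>K. u (euc_mult (euc_id d) t) = u (euc_id d)" using uper GD(2) by blast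
  have Wc: "W \<in> carrier_mat d d" and WT: "transpose_mat W = - W" using W unfolding skew_def d_def by auto
  have ad: "a \<in> carrier_vec d" using a d_def by simp
  have glob': "\<forall>k\<in>G. rot k *\<^sub>v u k = a + W *\<^sub>v (euc_act k x0 - x0)" using glob .
  have Sgs: "Sg \<subseteq> euc_group d2"
  proof -
    have "euc_discrete_subgroup d2 Sg" using sg unfolding space_group_def by (rule conjunct1)
    then have "euc_subgroup d2 Sg" unfolding euc_discrete_subgroup_def by (rule conjunct1)
    then show ?thesis unfolding euc_subgroup_def by (rule conjunct1)
  qed
  obtain B where B: "B \<in> carrier_mat d2 d2" and detB: "det B \<noteq> 0"
    and lat: "snd ` transl_subgroup d2 Sg = {B *\<^sub>v z | z. z \<in> carrier_vec d2 \<and> (\<forall>i<d2. z $ i \<in> \<int>)}"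
  proof -
    have "\<exists>B \<in> carrier_mat d2 d2. det B \<noteq> 0 \<and>
          snd ` transl_subgroup d2 Sg = {B *\<^sub>v z | z. z \<in> carrier_vec d2 \<and> (\<forall>i<d2. z $ i \<in> \<int>)}"
      using sg unfolding space_group_def by (rule conjunct2)
    then show ?thesis using that by blast
  qed
  have colzero: "W *\<^sub>v (0\<^sub>v d1 @\<^sub>v (B *\<^sub>v unit_vec d2 l)) = 0\<^sub>v d" if l: "l < d2" for l
  proof -
    define tau where "tau = B *\<^sub>v unit_vec d2 l"
    have tauc: "tau \<in> carrier_vec d2" using B tau_def by simp
    have "tau \<in> snd ` transl_subgroup d2 Sg" unfolding lat tau_def
      by (rule CollectI, rule exI[of _ "unit_vec d2 l"]) (use l in \<open>auto simp: index_unit_vec\<close>)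
    then obtain s where s: "s \<in> transl_subgroup d2 Sg" and ss: "snd s = tau" by blast
    have sS: "s \<in> Sg" and fs: "fst s = 1\<^sub>m d2" using s unfolding transl_subgroup_def by auto
    have "s \<in> proj2 d1 d2 ` T" using bij s unfolding bij_betw_def by blast
    then obtain t where tT: "t \<in> T" and pt: "proj2 d1 d2 t = s" by blast
    have tG: "t \<in> G" using tT TG by auto
    obtain A s' where t: "t = dsum d1 d2 A s'" and A: "A \<in> orth_group d1" and s'S: "s' \<in> Sg"
      using Gsub tG by blast
    have Ac: "A \<in> carrier_mat d1 d1" using A unfolding orth_group_def by auto
    have s'e: "s' \<in> euc_group d2" using Sgs s'S by auto
    have "s' = s" using pt proj2_dsum[OF Ac eg_D(1,2)[OF s'e]] t by simp
    then have ft: "fst t = four_block_mat A (0\<^sub>m d1 d2) (0\<^sub>m d2 d1) (1\<^sub>m d2)"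
      and st: "snd t = 0\<^sub>v d1 @\<^sub>v tau"
      using t fs ss by (auto simp: dsum_def)
    have ftc: "fst t \<in> carrier_mat d d" using ft Ac by (simp add: d_def)
    have stc: "snd t \<in> carrier_vec d" using st tauc by (simp add: d_def)
    have tfix: "fst t *\<^sub>v snd t = snd t"
      unfolding ft st using mult_mat_vec_split[OF Ac one_carrier_mat[of d2] zero_carrier_vec[of d1] tauc]
      using Ac tauc by (simp add: mmv_zero)
    define M where "M = euc_pow d t N"
    have MK: "M \<in> K" unfolding K_def pow_set_def M_def using tT by blast
    have pp: "fst M \<in> carrier_mat d d" "snd M = of_nat N \<cdot>\<^sub>v snd t" "fst M *\<^sub>v snd t = snd t"
      using pow_props[OF ftc stc tfix, of N] unfolding M_def by auto
    have Mfix: "fst M *\<^sub>v snd M = snd M"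
      unfolding pp(2) using mult_mat_vec[OF pp(1) stc] pp(3) by simp
    have "W *\<^sub>v snd M = 0\<^sub>v d" by (rule kill1[OF Gs x0 Wc ad glob' uc Ks KG per0 MK Mfix])
    then have "of_nat N \<cdot>\<^sub>v (W *\<^sub>v snd t) = 0\<^sub>v d"
      using mult_mat_vec[OF Wc stc] pp(2) by simp
    then have "W *\<^sub>v snd t = 0\<^sub>v d"
    proof -
      assume h: "of_nat N \<cdot>\<^sub>v (W *\<^sub>v snd t) = 0\<^sub>v d"
      show ?thesis
      proof (rule eq_vecI)
        fix i assume "i < dim_vec (0\<^sub>v d :: real vec)"
        then have i: "i < d" by simp
        have "(of_nat N \<cdot>\<^sub>v (W *\<^sub>v snd t)) $ i = 0" using h i by simp
        then have "of_nat N * (W *\<^sub>v snd t) $ i = 0" using Wc i by simp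
        then show "(W *\<^sub>v snd t) $ i = 0\<^sub>v d $ i" using N(1) i by simp
      qed (use Wc in simp)
    qed
    then show ?thesis using st tau_def by simp
  qed
  have Wzero: "W $$ (i, d1 + j) = 0" if i: "i < d" and j: "j < d2" for i j
  proof -
    define Q where "Q = mat d d2 (\<lambda>(i,j). W $$ (i, d1 + j))"
    have Qc: "Q \<in> carrier_mat d d2" unfolding Q_def by simp
    have QB: "Q * B = 0\<^sub>m d d2"
    proof (rule eq_matI)
      fix i l assume "i < dim_row (0\<^sub>m d d2 :: real mat)" "l < dim_col (0\<^sub>m d d2 :: real mat)"
      then have i: "i < d" and l: "l < d2" by auto
      have "(Q * B) $$ (i,l) = (\<Sum>j<d2. Q $$ (i,j) * B $$ (j,l))"
        using Qc B i l by (auto simp: scalar_prod_def lessThan_atLeast0 intro!: sum.cong)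
      also have "\<dots> = (\<Sum>j<d2. W $$ (i, d1 + j) * (B *\<^sub>v unit_vec d2 l) $ j)"
        using i l B by (intro sum.cong refl) (simp add: Q_def unit_col)
      also have "\<dots> = (W *\<^sub>v (0\<^sub>v d1 @\<^sub>v (B *\<^sub>v unit_vec d2 l))) $ i"
        using W_append[of W d1 d2 "B *\<^sub>v unit_vec d2 l" i] Wc B i by (simp add: d_def)
      also have "\<dots> = 0" using colzero[OF l] i by simp
      finally show "(Q * B) $$ (i,l) = 0\<^sub>m d d2 $$ (i,l)" using i l by simp
    qed (use Qc B in auto)
    have "B \<in> Units (ring_mat TYPE(real) d2 undefined)" by (rule det_non_zero_imp_unit[OF B detB])
    then obtain Bi where Bi: "Bi \<in> carrier_mat d2 d2" "B * Bi = 1\<^sub>m d2"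
      unfolding Units_def ring_mat_simps by auto
    have "Q = Q * (B * Bi)" using Qc Bi by simp
    also have "\<dots> = (Q * B) * Bi" using Qc B Bi by (simp add: assoc_mult_mat[of _ d d2 _ d2 _ d2])
    also have "\<dots> = 0\<^sub>m d d2" using QB Bi by simp
    finally have "Q = 0\<^sub>m d d2" .
    then have "Q $$ (i,j) = 0" using i j by simp
    then show ?thesis using i j by (simp add: Q_def)
  qed
  define S1 where "S1 = mat d1 d1 (\<lambda>(i,j). W $$ (i,j))"
  have Wsym: "W $$ (j,i) = - W $$ (i,j)" if "i < d" "j < d" for i j
  proof -
    have "transpose_mat W $$ (i,j) = (- W) $$ (i,j)" using WT by simp
    then show ?thesis using that Wc by simp
  qed
  show ?thesis
  proof (intro bexI[of _ S1])
    show "W = four_block_mat S1 (0\<^sub>m d1 d2) (0\<^sub>m d2 d1) (0\<^sub>m d2 d2)"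
    proof (rule eq_matI)
      fix i j assume ij: "i < dim_row (four_block_mat S1 (0\<^sub>m d1 d2) (0\<^sub>m d2 d1) (0\<^sub>m d2 (d2::nat)) :: real mat)"
        "j < dim_col (four_block_mat S1 (0\<^sub>m d1 d2) (0\<^sub>m d2 d1) (0\<^sub>m d2 (d2::nat)) :: real mat)"
      then have i: "i < d" and j: "j < d" by (auto simp: S1_def d_def)
      show "W $$ (i,j) = four_block_mat S1 (0\<^sub>m d1 d2) (0\<^sub>m d2 d1) (0\<^sub>m d2 d2) $$ (i,j)"
      proof (cases "j < d1")
        case True
        show ?thesis
        proof (cases "i < d1")
          case True
          then show ?thesis using \<open>j < d1\<close> i j by (simp add: S1_def d_def)
        next
          case False
          have "W $$ (j, d1 + (i - d1)) = 0" using Wzero[of j "i - d1"] False i j True by (simp add: d_def)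
          then have "W $$ (j,i) = 0" using False by simp
          moreover have "W $$ (i,j) = - W $$ (j,i)" using Wsym[OF j i] .
          ultimately have "W $$ (i,j) = 0" by simp
          then show ?thesis using False True i j by (simp add: S1_def d_def)
        qed
      next
        case False
        have "W $$ (i, d1 + (j - d1)) = 0" using Wzero[of i "j - d1"] False i j by (simp add: d_def)
        then have "W $$ (i,j) = 0" using False by simp
        then show ?thesis using False i j by (simp add: S1_def d_def)
      qed
    qed (use Wc in \<open>auto simp: S1_def d_def\<close>)
    have "transpose_mat S1 = - S1"
    proof (rule eq_matI)
      fix i j assume "i < dim_row (- S1)" "j < dim_col (- S1)"
      then have ij: "i < d1" "j < d1" by (auto simp: S1_def)
      have "W $$ (j,i) = - W $$ (i,j)" using Wsym[of i j] ij by (simp add: d_def)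
      then show "transpose_mat S1 $$ (i,j) = (- S1) $$ (i,j)" using ij by (simp add: S1_def)
    qed (auto simp: S1_def)
    then show "S1 \<in> skew d1" unfolding skew_def S1_def by auto
  qed
qed

lemma fb_skew:
  fixes S1 :: "real mat"
  assumes "S1 \<in> skew d1"
  shows "four_block_mat S1 (0\<^sub>m d1 d2) (0\<^sub>m d2 d1) (0\<^sub>m d2 d2) \<in> skew (d1 + d2)"
proof -
  have Sc: "S1 \<in> carrier_mat d1 d1" and ST: "transpose_mat S1 = - S1" using assms by (auto simp: skew_def)
  have e: "S1 $$ (j,i) = - S1 $$ (i,j)" if "i < d1" "j < d1" for i j
  proof -
    have "transpose_mat S1 $$ (i,j) = (- S1) $$ (i,j)" using ST by simp
    then show ?thesis using that Sc by simp
  qed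
  show ?thesis unfolding skew_def
  proof (intro CollectI conjI)
    show "four_block_mat S1 (0\<^sub>m d1 d2) (0\<^sub>m d2 d1) (0\<^sub>m d2 d2) \<in> carrier_mat (d1 + d2) (d1 + d2)"
      using Sc by simp
    show "transpose_mat (four_block_mat S1 (0\<^sub>m d1 d2) (0\<^sub>m d2 d1) (0\<^sub>m d2 d2)) =
      - four_block_mat S1 (0\<^sub>m d1 d2) (0\<^sub>m d2 d1) (0\<^sub>m d2 d2)"
    proof (rule eq_matI)
      fix i j assume ij: "i < dim_row (- four_block_mat S1 (0\<^sub>m d1 d2) (0\<^sub>m d2 d1) (0\<^sub>m d2 (d2::nat)))"
        "j < dim_col (- four_block_mat S1 (0\<^sub>m d1 d2) (0\<^sub>m d2 d1) (0\<^sub>m d2 (d2::nat)))"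
      then have i: "i < d1 + d2" and j: "j < d1 + d2" using Sc by auto
      show "transpose_mat (four_block_mat S1 (0\<^sub>m d1 d2) (0\<^sub>m d2 d1) (0\<^sub>m d2 d2)) $$ (i,j) =
        (- four_block_mat S1 (0\<^sub>m d1 d2) (0\<^sub>m d2 d1) (0\<^sub>m d2 d2)) $$ (i,j)"
        using i j Sc e[of i j] by auto
    qed (use Sc in auto)
  qed
qed

lemma Uiso_cong:
  assumes "\<forall>h\<in>R. v h = v' h" "v \<in> U_iso d x0 R"
  shows "v' \<in> U_iso d x0 R"
  using assms unfolding U_iso_def by auto

lemma conj_mult:
  assumes c: "c \<in> euc_group d" and h: "h \<in> euc_group d" and t: "t \<in> euc_group d"
    and hi: "euc_inv h \<in> euc_group d" and x: "euc_mult (euc_inv h) t \<in> euc_group d"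
    and t': "euc_mult (euc_mult (euc_inv h) t) h \<in> euc_group d"
  shows "euc_mult (euc_mult c h) (euc_mult (euc_mult (euc_inv h) t) h) = euc_mult (euc_mult c t) h"
proof -
  note Dc = eg_D(1,2)[OF c] and Dh = eg_D(1,2)[OF h] and Dt = eg_D(1,2)[OF t]
    and Dhi = eg_D(1,2)[OF hi] and Dx = eg_D(1,2)[OF x] and Dt' = eg_D(1,2)[OF t']
  have "euc_mult (euc_mult c h) (euc_mult (euc_mult (euc_inv h) t) h)
      = euc_mult c (euc_mult h (euc_mult (euc_mult (euc_inv h) t) h))"
    using euc_mult_assoc[OF Dc Dh Dt'] .
  also have "euc_mult h (euc_mult (euc_mult (euc_inv h) t) h) = euc_mult (euc_mult h (euc_mult (euc_inv h) t)) h"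
    using euc_mult_assoc[OF Dh Dx Dh] by simp
  also have "euc_mult h (euc_mult (euc_inv h) t) = euc_mult (euc_mult h (euc_inv h)) t"
    using euc_mult_assoc[OF Dh Dhi Dt] by simp
  also have "\<dots> = t" using euc_inv_right[OF h] euc_id_mult[OF Dt] by simp
  also have "euc_mult c (euc_mult t h) = euc_mult (euc_mult c t) h"
    using euc_mult_assoc[OF Dc Dt Dh] by simp
  finally show ?thesis .
qed

theorem theorem3p27:
  assumes setting: "standing_setting d1 d2 S G T m0 C x0 daff"
    and R: "property2 (d1 + d2) G x0 R"
  shows "\<forall>N u. N \<ge> 1 \<and> m0 dvd N \<and> periodic (d1 + d2) G T N u \<longrightarrow>
           (seminorm_R (d1 + d2) x0 R (C N) N u = 0 \<longleftrightarrow>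
              u \<in> U_iso00 d1 d2 x0 G \<inter> U_per (d1 + d2) G T m0)"
proof (intro allI impI)
  fix N u assume H: "N \<ge> 1 \<and> m0 dvd N \<and> periodic (d1 + d2) G T N u"
  then have N1: "N \<ge> 1" and Nd: "m0 dvd N" and per: "periodic (d1 + d2) G T N u" by auto
  define d where "d = d1 + d2"
  have Gd: "euc_discrete_subgroup d G"
    and norm: "\<forall>N\<ge>1. euc_normal d (pow_set d T N) G \<longleftrightarrow> m0 dvd N"
    and Cp: "\<forall>N\<ge>1. m0 dvd N \<longrightarrow> C N \<subseteq> G \<and> finite (C N)
      \<and> (\<forall>g\<in>G. \<exists>!c\<in>C N. \<exists>t\<in>pow_set d T N. g = euc_mult c t)"
    and x0: "x0 \<in> carrier_vec d"
    using setting unfolding standing_setting_def d_def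
    apply - apply (elim conjE, assumption)+ done
  have Gs: "euc_subgroup d G" using Gd unfolding euc_discrete_subgroup_def by (rule conjunct1)
  note GD = subgroup_D[OF Gs]
  have Ge: "g \<in> euc_group d" if "g \<in> G" for g using GD(1) that by auto
  define K where "K = pow_set d T N"
  have Kn: "euc_normal d K G" unfolding K_def using norm[rule_format, OF N1] Nd by (rule iffD2)
  have Ks: "euc_subgroup d K" and KG: "K \<subseteq> G"
    and Knorm: "\<forall>g\<in>G. \<forall>k\<in>K. euc_mult (euc_mult g k) (euc_inv g) \<in> K"
    using Kn unfolding euc_normal_def by auto
  have uc: "\<forall>g\<in>G. u g \<in> carrier_vec d" and uper: "\<forall>g\<in>G. \<forall>t\<in>K. u (euc_mult g t) = u g"
    using per unfolding periodic_def K_def d_def by auto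
  have CG: "C N \<subseteq> G" and Cfin: "finite (C N)"
    and Cdec: "\<forall>g\<in>G. \<exists>!c\<in>C N. \<exists>t\<in>K. g = euc_mult c t"
    using Cp N1 Nd unfolding K_def by auto
  have Cne: "C N \<noteq> {}" using Cdec GD(2) by blast
  have Cpos: "card (C N) > 0" using Cne Cfin by (simp add: card_gt_0_iff)
  have Rfin: "finite R" and RG: "R \<subseteq> G"
    and Rex: "\<exists>R' R''. R' \<subseteq> G \<and> euc_id d \<in> R' \<and> euc_gen d R' = G \<and> property1 d G x0 R''
        \<and> {euc_mult g h | g h. g \<in> R' \<and> h \<in> R''} \<subseteq> R"
    using R unfolding property2_def d_def by auto
  have Re: "R \<subseteq> euc_group d" using RG GD(1) by auto
  have wc: "\<forall>h\<in>R. u (euc_mult g h) \<in> carrier_vec d" if "g \<in> G" for g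
    using uc GD(3)[OF that] RG by auto
  have dz: "dist_Uiso d x0 R (\<lambda>h. u (euc_mult g h)) = 0 \<longleftrightarrow> (\<lambda>h. u (euc_mult g h)) \<in> U_iso d x0 R"
    if "g \<in> G" for g
    by (rule dist_Uiso_zero_iff[OF Rfin Re x0 wc[OF that]])
  have sem: "seminorm_R d x0 R (C N) N u = 0 \<longleftrightarrow> (\<forall>g\<in>C N. (\<lambda>h. u (euc_mult g h)) \<in> U_iso d x0 R)"
  proof -
    have "seminorm_R d x0 R (C N) N u = 0 \<longleftrightarrow>
        (\<Sum>g\<in>C N. (dist_Uiso d x0 R (\<lambda>h. u (euc_mult g h)))\<^sup>2) = 0"
      unfolding seminorm_R_def using Cpos
      by (simp add: sum_nonneg)
    also have "\<dots> \<longleftrightarrow> (\<forall>g\<in>C N. (dist_Uiso d x0 R (\<lambda>h. u (euc_mult g h)))\<^sup>2 = 0)"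
      by (rule sum_nonneg_eq_0_iff[OF Cfin]) simp
    also have "\<dots> \<longleftrightarrow> (\<forall>g\<in>C N. (\<lambda>h. u (euc_mult g h)) \<in> U_iso d x0 R)"
      using dz CG by auto
    finally show ?thesis .
  qed
  have uper_in: "u \<in> U_per (d1 + d2) G T m0" unfolding U_per_def using N1 Nd per by blast
  show "seminorm_R (d1 + d2) x0 R (C N) N u = 0 \<longleftrightarrow> u \<in> U_iso00 d1 d2 x0 G \<inter> U_per (d1 + d2) G T m0"
    unfolding d_def[symmetric]
  proof
    assume "seminorm_R d x0 R (C N) N u = 0"
    then have winC: "\<forall>g\<in>C N. (\<lambda>h. u (euc_mult g h)) \<in> U_iso d x0 R" using sem by simp
    have winG: "(\<lambda>h. u (euc_mult g h)) \<in> U_iso d x0 R" if g: "g \<in> G" for g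
    proof -
      obtain c t where c: "c \<in> C N" and t: "t \<in> K" and gct: "g = euc_mult c t" using Cdec g by blast
      have cG: "c \<in> G" using c CG by auto
      have tG: "t \<in> G" using t KG by auto
      have eqs: "u (euc_mult c h) = u (euc_mult g h)" if h: "h \<in> R" for h
      proof -
        have hG: "h \<in> G" using h RG by auto
        have hiG: "euc_inv h \<in> G" using GD(4)[OF hG] .
        define t' where "t' = euc_mult (euc_mult (euc_inv h) t) h"
        have "euc_mult (euc_mult (euc_inv h) t) (euc_inv (euc_inv h)) \<in> K"
          using Knorm hiG t by blast
        then have t'K: "t' \<in> K" unfolding t'_def using euc_inv_inv[OF Ge[OF hG]] by simp
        have xG: "euc_mult (euc_inv h) t \<in> G" using GD(3) hiG tG by blast
        have "euc_mult (euc_mult c h) t' = euc_mult g h"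
          unfolding t'_def gct
          by (rule conj_mult[OF Ge[OF cG] Ge[OF hG] Ge[OF tG] Ge[OF hiG] Ge[OF xG]])
            (use Ge[OF KG[THEN subsetD, OF t'K]] t'_def in simp)
        moreover have "u (euc_mult (euc_mult c h) t') = u (euc_mult c h)"
          using uper GD(3)[OF cG hG] t'K by blast
        ultimately show ?thesis by simp
      qed
      have eqs': "\<forall>h\<in>R. (\<lambda>h. u (euc_mult c h)) h = (\<lambda>h. u (euc_mult g h)) h"
        using eqs by simp
      show ?thesis by (rule Uiso_cong[OF eqs' winC[rule_format, OF c]])
    qed
    have loc: "\<forall>g\<in>G. \<exists>a\<in>carrier_vec d. \<exists>S\<in>skew d. \<forall>h\<in>R.
        rot (euc_mult g h) *\<^sub>v u (euc_mult g h) = a + S *\<^sub>v (euc_act (euc_mult g h) x0 - x0)"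
    proof
      fix g assume g: "g \<in> G"
      have "\<exists>a\<in>carrier_vec d. \<exists>W\<in>skew d. \<forall>h\<in>R. rot h *\<^sub>v u (euc_mult g h) = a + W *\<^sub>v (euc_act h x0 - x0)"
        using winG[OF g] unfolding U_iso_def by (simp only: mem_Collect_eq)
      then obtain a W where a: "a \<in> carrier_vec d" and W: "W \<in> skew d"
        and eq: "\<forall>h\<in>R. rot h *\<^sub>v u (euc_mult g h) = a + W *\<^sub>v (euc_act h x0 - x0)"
        by blast
      show "\<exists>a\<in>carrier_vec d. \<exists>S\<in>skew d. \<forall>h\<in>R.
        rot (euc_mult g h) *\<^sub>v u (euc_mult g h) = a + S *\<^sub>v (euc_act (euc_mult g h) x0 - x0)"
        by (rule local_to_global[OF Ge[OF g] Re x0 wc[OF g] a W eq])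
    qed
    obtain R' R'' where R'G: "R' \<subseteq> G" and idR': "euc_id d \<in> R'" and gen: "euc_gen d R' = G"
      and P1: "property1 d G x0 R''" and RR: "{euc_mult g h | g h. g \<in> R' \<and> h \<in> R''} \<subseteq> R"
      using Rex by blast
    obtain a W where a: "a \<in> carrier_vec d" and W: "W \<in> skew d"
      and glob: "\<forall>k\<in>G. rot k *\<^sub>v u k = a + W *\<^sub>v (euc_act k x0 - x0)"
      using gluing[OF Gs x0 uc R'G gen P1 RR idR' RG loc] by blast
    obtain S1 where S1: "S1 \<in> skew d1" and WS: "W = four_block_mat S1 (0\<^sub>m d1 d2) (0\<^sub>m d2 d1) (0\<^sub>m d2 d2)"
      using block_struct[OF setting N1 Nd per, of a W] a W glob unfolding d_def by blast
    have "u \<in> U_iso00 d1 d2 x0 G"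
      unfolding U_iso00_def d_def[symmetric]
      by (intro CollectI conjI bexI[of _ a] bexI[of _ S1]) (use uc a S1 glob WS in simp_all)
    then show "u \<in> U_iso00 d1 d2 x0 G \<inter> U_per d G T m0" using uper_in d_def by simp
  next
    assume "u \<in> U_iso00 d1 d2 x0 G \<inter> U_per d G T m0"
    then have "u \<in> U_iso00 d1 d2 x0 G" by simp
    then have "\<exists>a\<in>carrier_vec (d1 + d2). \<exists>S\<in>skew d1. \<forall>g\<in>G. rot g *\<^sub>v u g
            = a + four_block_mat S (0\<^sub>m d1 d2) (0\<^sub>m d2 d1) (0\<^sub>m d2 d2) *\<^sub>v (euc_act g x0 - x0)"
      unfolding U_iso00_def by (simp only: mem_Collect_eq)
    then obtain a S1 where a: "a \<in> carrier_vec d" and S1: "S1 \<in> skew d1"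
      and eq: "\<forall>g\<in>G. rot g *\<^sub>v u g = a + four_block_mat S1 (0\<^sub>m d1 d2) (0\<^sub>m d2 d1) (0\<^sub>m d2 d2) *\<^sub>v (euc_act g x0 - x0)"
      unfolding d_def by blast
    have W: "four_block_mat S1 (0\<^sub>m d1 d2) (0\<^sub>m d2 d1) (0\<^sub>m d2 d2) \<in> skew d"
      using fb_skew[OF S1] d_def by simp
    have "\<forall>g\<in>C N. (\<lambda>h. u (euc_mult g h)) \<in> U_iso d x0 R"
    proof
      fix g assume "g \<in> C N"
      then have g: "g \<in> G" using CG by auto
      show "(\<lambda>h. u (euc_mult g h)) \<in> U_iso d x0 R"
      proof (rule global_to_local[OF Ge[OF g] Re x0 wc[OF g] a W], intro ballI)
        fix h assume "h \<in> R"
        then have "euc_mult g h \<in> G" using GD(3)[OF g] RG by blast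
        then show "rot (euc_mult g h) *\<^sub>v u (euc_mult g h) = a + four_block_mat S1 (0\<^sub>m d1 d2) (0\<^sub>m d2 d1) (0\<^sub>m d2 d2) *\<^sub>v (euc_act (euc_mult g h) x0 - x0)"
          using eq by blast
      qed
    qed
    then show "seminorm_R d x0 R (C N) N u = 0" using sem by simp
  qed
qed

end
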